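(* Let $\Delta$ be a nilpotent odd Laplacian on an antisymplectic supermanifold, let $\Psi$ be a Grassmann-odd function, let $\hbar$ be a constant, and let $W_i$ and $W_f$ be bosonic functions related by the finite $\Delta$-exact transformation $$e^{\frac{i}{\hbar} W_f}=e^{-[\Delta,\Psi]}\,e^{\frac{i}{\hbar} W_i}.$$ Then $$W_f=e^{{\rm ad}\Psi}W_i+(i\hbar)\,\frac{e^{{\rm ad}\Psi}-1}{{\rm ad}\Psi}\,\Delta\Psi ,$$ where $\frac{e^{x}-1}{x}=\sum_{n\ge0}\frac{x^n}{(n+1)!}$.
   Context: Coordinates $\Gamma^A$ have Grassmann parities $\epsilon_A$; the antibracket is $(F,G)=(\partial^r F/\partial\Gamma^A)E^{AB}(\partial^l G/\partial\Gamma^B)$ with $E^{AB}$ graded skew-symmetric ($E^{BA}=-(-1)^{(\epsilon_A+1)(\epsilon_B+1)}E^{AB}$) and satisfying the graded Jacobi identity. The odd Laplacian with measure density $\rho$ is $\Delta=\frac{(-1)^{\epsilon_A}}{2\rho}\frac{\partial^l}{\partial\Gamma^A}\rho E^{AB}\frac{\partial^l}{\partial\Gamma^B}$, assumed nilpotent: $\Delta^2=0$. $[A,B]=AB-(-1)^{\epsilon_A\epsilon_B}BA$ is the graded commutator, so $[\Delta,\Psi]$ is the operator $F\mapsto\Delta(\Psi F)+\Psi\Delta F$, and $e^{-[\Delta,\Psi]}$ is its exponential series. ${\rm ad}\Psi=(\Psi,\cdot)$, and $\Delta\Psi$ denotes $\Delta$ applied to the function $\Psi$. *)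

theory Defs
  imports "HOL-Analysis.Analysis" "HOL-Library.Function_Algebras"
begin

text \<open>An element of the complex Grassmann algebra on odd generators theta_0, theta_1, ...
  is represented by its coefficient function: a I is the coefficient of the ordered
  monomial theta_{i1} ... theta_{ik} (i1 < ... < ik, I = {i1,...,ik}).\<close>

type_synonym gr = "nat set \<Rightarrow> complex"

definition gsign :: "nat set \<Rightarrow> nat set \<Rightarrow> complex" where
  "gsign I J = (-1) ^ card {(i, j). i \<in> I \<and> j \<in> J \<and> j < i}"

definition gmult :: "gr \<Rightarrow> gr \<Rightarrow> gr" where
  "gmult a b = (\<lambda>K. \<Sum>I\<in>{I. I \<subseteq> K}. gsign I (K - I) * a I * b (K - I))"

definition gone :: gr where
  "gone = (\<lambda>I. if I = {} then 1 else 0)"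

definition gscale :: "complex \<Rightarrow> gr \<Rightarrow> gr" where
  "gscale c a = (\<lambda>I. c * a I)"

fun gpow :: "gr \<Rightarrow> nat \<Rightarrow> gr" where
  "gpow a 0 = gone"
| "gpow a (Suc k) = gmult a (gpow a k)"

definition gsoul :: "gr \<Rightarrow> gr" where
  "gsoul a = (\<lambda>I. if I = {} then 0 else a I)"

text \<open>Exponential and inverse of a Grassmann number with m generators
  (the soul part is nilpotent of order m+1, so the series terminate).\<close>
definition gexp :: "nat \<Rightarrow> gr \<Rightarrow> gr" where
  "gexp m a = gscale (exp (a {})) (\<Sum>k\<le>m. gscale (1 / fact k) (gpow (gsoul a) k))"

definition ginv :: "nat \<Rightarrow> gr \<Rightarrow> gr" where
  "ginv m a = gscale (1 / a {}) (\<Sum>k\<le>m. gpow (gscale (- 1 / a {}) (gsoul a)) k)"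

text \<open>A superfunction is a Grassmann-algebra-valued function of the even coordinates
  x in real^'n; the odd coordinates are theta_0..theta_(m-1).\<close>
type_synonym 'n sfun = "real^'n \<Rightarrow> gr"

definition pd :: "'n::finite \<Rightarrow> (real^'n \<Rightarrow> complex) \<Rightarrow> real^'n \<Rightarrow> complex" where
  "pd a f x = vector_derivative (\<lambda>s::real. f (x + s *\<^sub>R axis a 1)) (at 0)"

fun pds :: "'n::finite list \<Rightarrow> (real^'n \<Rightarrow> complex) \<Rightarrow> real^'n \<Rightarrow> complex" where
  "pds [] f = f"
| "pds (a # as) f = pd a (pds as f)"

definition smooth_on :: "(real^'n::finite) set \<Rightarrow> (real^'n \<Rightarrow> complex) \<Rightarrow> bool" where
  "smooth_on U f \<longleftrightarrow> (\<forall>as. pds as f differentiable_on U)"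

definition sfun :: "nat \<Rightarrow> (real^'n::finite) set \<Rightarrow> 'n sfun \<Rightarrow> bool" where
  "sfun m U F \<longleftrightarrow> (\<forall>x\<in>U. \<forall>I. F x I \<noteq> 0 \<longrightarrow> I \<subseteq> {..<m})
                 \<and> (\<forall>I. smooth_on U (\<lambda>x. F x I))"

definition homog :: "nat \<Rightarrow> (real^'n::finite) set \<Rightarrow> 'n sfun \<Rightarrow> bool" where
  "homog p U F \<longleftrightarrow> (\<forall>x\<in>U. \<forall>I. F x I \<noteq> 0 \<longrightarrow> card I mod 2 = p mod 2)"

definition smul :: "'n sfun \<Rightarrow> 'n sfun \<Rightarrow> 'n sfun" where
  "smul F G = (\<lambda>x. gmult (F x) (G x))"

text \<open>Coordinates Gamma^A: A = Inl a (even x^a) or Inr alpha (odd theta^alpha, alpha < m).\<close>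
definition idx :: "nat \<Rightarrow> ('n::finite + nat) set" where
  "idx m = range Inl \<union> Inr ` {..<m}"

fun eps :: "'n + nat \<Rightarrow> nat" where
  "eps (Inl _) = 0"
| "eps (Inr _) = 1"

definition dleft :: "'n::finite + nat \<Rightarrow> 'n sfun \<Rightarrow> 'n sfun" where
  "dleft A F = (case A of
      Inl a \<Rightarrow> (\<lambda>x J. pd a (\<lambda>y. F y J) x)
    | Inr \<alpha> \<Rightarrow> (\<lambda>x J. if \<alpha> \<in> J then 0
                     else (-1) ^ card {i\<in>J. i < \<alpha>} * F x (insert \<alpha> J)))"

definition dright :: "'n::finite + nat \<Rightarrow> 'n sfun \<Rightarrow> 'n sfun" where
  "dright A F = (case A of
      Inl a \<Rightarrow> (\<lambda>x J. pd a (\<lambda>y. F y J) x)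
    | Inr \<alpha> \<Rightarrow> (\<lambda>x J. if \<alpha> \<in> J then 0
                     else (-1) ^ card {i\<in>J. \<alpha> < i} * F x (insert \<alpha> J)))"

definition abr :: "nat \<Rightarrow> ('n::finite + nat \<Rightarrow> 'n + nat \<Rightarrow> 'n sfun)
                   \<Rightarrow> 'n sfun \<Rightarrow> 'n sfun \<Rightarrow> 'n sfun" where
  "abr m E F G = (\<lambda>x. \<Sum>A\<in>idx m. \<Sum>B\<in>idx m.
                     gmult (gmult (dright A F x) (E A B x)) (dleft B G x))"

definition Lap :: "nat \<Rightarrow> 'n::finite sfun \<Rightarrow> ('n + nat \<Rightarrow> 'n + nat \<Rightarrow> 'n sfun)
                   \<Rightarrow> 'n sfun \<Rightarrow> 'n sfun" where
  "Lap m \<rho> E F = (\<lambda>x. gmult (ginv m (\<rho> x))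
       (\<Sum>A\<in>idx m. \<Sum>B\<in>idx m. gscale ((-1) ^ eps A / 2)
          (dleft A (\<lambda>y. gmult (\<rho> y) (gmult (E A B y) (dleft B F y))) x)))"

text \<open>The operator [Delta, Psi] for odd Psi: F \<mapsto> Delta(Psi F) + Psi Delta F.\<close>
definition commLap :: "nat \<Rightarrow> 'n::finite sfun \<Rightarrow> ('n + nat \<Rightarrow> 'n + nat \<Rightarrow> 'n sfun)
                   \<Rightarrow> 'n sfun \<Rightarrow> 'n sfun \<Rightarrow> 'n sfun" where
  "commLap m \<rho> E \<Psi> F = (\<lambda>x. Lap m \<rho> E (smul \<Psi> F) x + smul \<Psi> (Lap m \<rho> E F) x)"

definition graded_jacobi :: "nat \<Rightarrow> (real^'n::finite) set \<Rightarrow> ('n + nat \<Rightarrow> 'n + nat \<Rightarrow> 'n sfun) \<Rightarrow> bool" where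
  "graded_jacobi m U E \<longleftrightarrow>
     (\<forall>F G H p q r. sfun m U F \<and> sfun m U G \<and> sfun m U H
        \<and> homog p U F \<and> homog q U G \<and> homog r U H \<longrightarrow>
        (\<forall>x\<in>U. gscale ((-1) ^ ((p + 1) * (r + 1))) (abr m E F (abr m E G H) x)
              + gscale ((-1) ^ ((q + 1) * (p + 1))) (abr m E G (abr m E H F) x)
              + gscale ((-1) ^ ((r + 1) * (q + 1))) (abr m E H (abr m E F G) x) = 0))"

definition antisymplectic :: "nat \<Rightarrow> (real^'n::finite) set \<Rightarrow> ('n + nat \<Rightarrow> 'n + nat \<Rightarrow> 'n sfun) \<Rightarrow> bool" where
  "antisymplectic m U E \<longleftrightarrow>
     (\<forall>A\<in>idx m. \<forall>B\<in>idx m. sfun m U (E A B) \<and> homog (eps A + eps B + 1) U (E A B)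
        \<and> (\<forall>x\<in>U. E B A x = gscale (- ((-1) ^ ((eps A + 1) * (eps B + 1)))) (E A B x)))
     \<and> graded_jacobi m U E
     \<and> (\<exists>Einv. \<forall>x\<in>U. \<forall>A\<in>idx m. \<forall>C\<in>idx m.
           (\<Sum>B\<in>idx m. gmult (E A B x) (Einv B C x)) = (if A = C then gone else 0))"

definition nilpotent_Lap :: "nat \<Rightarrow> (real^'n::finite) set \<Rightarrow> 'n sfun
                             \<Rightarrow> ('n + nat \<Rightarrow> 'n + nat \<Rightarrow> 'n sfun) \<Rightarrow> bool" where
  "nilpotent_Lap m U \<rho> E \<longleftrightarrow>
     (\<forall>F. sfun m U F \<longrightarrow> (\<forall>x\<in>U. Lap m \<rho> E (Lap m \<rho> E F) x = 0))"

text \<open>A series S represents sum_n t^n S n.\<close>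
definition sser_mult :: "(nat \<Rightarrow> 'n sfun) \<Rightarrow> (nat \<Rightarrow> 'n sfun) \<Rightarrow> nat \<Rightarrow> 'n sfun" where
  "sser_mult P Q = (\<lambda>n x. \<Sum>i\<le>n. gmult (P i x) (Q (n - i) x))"

fun sser_pow :: "(nat \<Rightarrow> 'n sfun) \<Rightarrow> nat \<Rightarrow> nat \<Rightarrow> 'n sfun" where
  "sser_pow P 0 = (\<lambda>n x. if n = 0 then gone else 0)"
| "sser_pow P (Suc k) = sser_mult P (sser_pow P k)"

text \<open>exp(W) = exp(W_0) * sum_k (W - W_0)^k / k!, computed coefficientwise
  (only k \<le> n contributes to the t^n coefficient).\<close>
definition sser_exp :: "nat \<Rightarrow> (nat \<Rightarrow> 'n sfun) \<Rightarrow> nat \<Rightarrow> 'n sfun" where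
  "sser_exp m W = (\<lambda>n x. gmult (gexp m (W 0 x))
      (\<Sum>k\<le>n. gscale (1 / fact k) (sser_pow (\<lambda>j. if j = 0 then (\<lambda>_. 0) else W j) k n x)))"

end

theory Submission
  imports Defs
begin

lemma gsum_apply: "(\<Sum>k\<in>A. f k) I = (\<Sum>k\<in>A. (f k :: gr) I)"
  by (induction A rule: infinite_finite_induct) auto

definition ginvc :: "nat set \<Rightarrow> nat set \<Rightarrow> nat" where
  "ginvc I J = card {(i, j). i \<in> I \<and> j \<in> J \<and> j < i}"

lemma gsign_inv: "gsign I J = (-1) ^ ginvc I J"
  by (simp add: gsign_def ginvc_def)

lemma inv_union_left:
  assumes "finite I" "finite J" "finite L" "I \<inter> J = {}"
  shows "ginvc (I \<union> J) L = ginvc I L + ginvc J L"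
proof -
  have e: "{(i, j). i \<in> I \<union> J \<and> j \<in> L \<and> j < i} =
     {(i, j). i \<in> I \<and> j \<in> L \<and> j < i} \<union> {(i, j). i \<in> J \<and> j \<in> L \<and> j < i}" by auto
  have f1: "finite {(i, j). i \<in> I \<and> j \<in> L \<and> j < i}"
    by (rule finite_subset[of _ "I \<times> L"]) (use assms in auto)
  have f2: "finite {(i, j). i \<in> J \<and> j \<in> L \<and> j < i}"
    by (rule finite_subset[of _ "J \<times> L"]) (use assms in auto)
  show ?thesis unfolding ginvc_def e
    by (rule card_Un_disjoint[OF f1 f2]) (use assms in auto)
qed

lemma inv_union_right:
  assumes "finite I" "finite J" "finite L" "J \<inter> L = {}"
  shows "ginvc I (J \<union> L) = ginvc I J + ginvc I L"
proof -
  have e: "{(i, j). i \<in> I \<and> j \<in> J \<union> L \<and> j < i} =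
     {(i, j). i \<in> I \<and> j \<in> J \<and> j < i} \<union> {(i, j). i \<in> I \<and> j \<in> L \<and> j < i}" by auto
  have f1: "finite {(i, j). i \<in> I \<and> j \<in> J \<and> j < i}"
    by (rule finite_subset[of _ "I \<times> J"]) (use assms in auto)
  have f2: "finite {(i, j). i \<in> I \<and> j \<in> L \<and> j < i}"
    by (rule finite_subset[of _ "I \<times> L"]) (use assms in auto)
  show ?thesis unfolding ginvc_def e
    by (rule card_Un_disjoint[OF f1 f2]) (use assms in auto)
qed

lemma inv_swap:
  assumes "finite I" "finite J" "I \<inter> J = {}"
  shows "ginvc I J + ginvc J I = card I * card J"
proof -
  have f1: "finite {(i, j). i \<in> I \<and> j \<in> J \<and> j < i}"
    by (rule finite_subset[of _ "I \<times> J"]) (use assms in auto)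
  have f2: "finite {(i, j). i \<in> I \<and> j \<in> J \<and> i < j}"
    by (rule finite_subset[of _ "I \<times> J"]) (use assms in auto)
  have "ginvc J I = card {(i, j). i \<in> I \<and> j \<in> J \<and> i < j}"
    unfolding ginvc_def
    by (rule bij_betw_same_card[of "\<lambda>(a,b). (b,a)"]) (auto simp: bij_betw_def inj_on_def image_def)
  moreover have "I \<times> J = {(i, j). i \<in> I \<and> j \<in> J \<and> j < i} \<union> {(i, j). i \<in> I \<and> j \<in> J \<and> i < j}"
    using assms(3) by auto
  moreover have "card ({(i, j). i \<in> I \<and> j \<in> J \<and> j < i} \<union> {(i, j). i \<in> I \<and> j \<in> J \<and> i < j})
     = card {(i, j). i \<in> I \<and> j \<in> J \<and> j < i} + card {(i, j). i \<in> I \<and> j \<in> J \<and> i < j}"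
    by (rule card_Un_disjoint[OF f1 f2]) auto
  ultimately show ?thesis unfolding ginvc_def by (metis card_cartesian_product)
qed

lemma gsign_union_left:
  "finite I \<Longrightarrow> finite J \<Longrightarrow> finite L \<Longrightarrow> I \<inter> J = {} \<Longrightarrow>
   gsign (I \<union> J) L = gsign I L * gsign J L"
  by (simp add: gsign_inv inv_union_left power_add)

lemma gsign_union_right:
  "finite I \<Longrightarrow> finite J \<Longrightarrow> finite L \<Longrightarrow> J \<inter> L = {} \<Longrightarrow>
   gsign I (J \<union> L) = gsign I J * gsign I L"
  by (simp add: gsign_inv inv_union_right power_add)

lemma gsign_sq: "gsign I J * gsign I J = 1"
  by (simp add: gsign_inv power_add[symmetric] flip: mult_2)

lemma gsign_swap:
  "finite I \<Longrightarrow> finite J \<Longrightarrow> I \<inter> J = {} \<Longrightarrow>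
   gsign I J * gsign J I = (-1) ^ (card I * card J)"
  by (simp add: gsign_inv inv_swap power_add[symmetric])

lemma Pow_eq: "{I. I \<subseteq> K} = Pow K" by auto

lemma gmult_def2: "gmult a b K = (\<Sum>I\<in>Pow K. gsign I (K - I) * a I * b (K - I))"
  by (simp add: gmult_def Pow_eq)

lemma gmult_infinite: "infinite K \<Longrightarrow> gmult a b K = 0"
  by (simp add: gmult_def2)

lemma sub_reindex:
  assumes "finite K"
  shows "(\<Sum>L\<in>Pow K. \<Sum>I\<in>Pow L. f I (L - I) (K - L)) =
         (\<Sum>I\<in>Pow K. \<Sum>J\<in>Pow (K - I). f I J (K - I - J))"
proof -
  have "(\<Sum>L\<in>Pow K. \<Sum>I\<in>Pow L. f I (L - I) (K - L)) =
        (\<Sum>L\<in>Pow K. \<Sum>I\<in>{I \<in> Pow K. I \<subseteq> L}. f I (L - I) (K - L))"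
    by (rule sum.cong) (auto intro!: sum.cong)
  also have "\<dots> = (\<Sum>I\<in>Pow K. \<Sum>L | L \<in> Pow K \<and> I \<subseteq> L. f I (L - I) (K - L))"
    by (rule sum.swap_restrict) (use assms in auto)
  also have "\<dots> = (\<Sum>I\<in>Pow K. \<Sum>J\<in>Pow (K - I). f I J (K - I - J))"
  proof (rule sum.cong[OF refl])
    fix I assume I: "I \<in> Pow K"
    show "(\<Sum>L | L \<in> Pow K \<and> I \<subseteq> L. f I (L - I) (K - L)) = (\<Sum>J\<in>Pow (K - I). f I J (K - I - J))"
    proof (rule sum.reindex_bij_witness[of _ "\<lambda>J. I \<union> J" "\<lambda>L. L - I"])
      fix L assume L: "L \<in> {L \<in> Pow K. I \<subseteq> L}"
      have "K - I - (L - I) = K - L" using L by auto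
      thus "f I (L - I) (K - I - (L - I)) = f I (L - I) (K - L)" by simp
    qed (use I in auto)
  qed
  finally show ?thesis .
qed

lemma gmult_assoc: "gmult (gmult a b) c = gmult a (gmult b c)"
proof
  fix K
  show "gmult (gmult a b) c K = gmult a (gmult b c) K"
  proof (cases "finite K")
    case False thus ?thesis by (simp add: gmult_infinite)
  next
    case fin: True
    have "gmult (gmult a b) c K = (\<Sum>L\<in>Pow K. \<Sum>I\<in>Pow L.
        gsign L (K - L) * gsign I (L - I) * a I * b (L - I) * c (K - L))"
      unfolding gmult_def2[of "gmult a b"]
      by (rule sum.cong[OF refl]) (auto simp: gmult_def2 sum_distrib_left sum_distrib_right mult.assoc
            intro!: sum.cong dest: finite_subset[OF _ fin])
    also have "\<dots> = (\<Sum>I\<in>Pow K. \<Sum>J\<in>Pow (K - I).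
        gsign (I \<union> J) (K - I - J) * gsign I J * a I * b J * c (K - I - J))"
    proof -
      have "(\<Sum>L\<in>Pow K. \<Sum>I\<in>Pow L.
        gsign L (K - L) * gsign I (L - I) * a I * b (L - I) * c (K - L)) =
        (\<Sum>L\<in>Pow K. \<Sum>I\<in>Pow L.
        gsign (I \<union> (L - I)) (K - L) * gsign I (L - I) * a I * b (L - I) * c (K - L))"
        by (intro sum.cong refl) (auto simp: Un_absorb1)
      also have "\<dots> = (\<Sum>I\<in>Pow K. \<Sum>J\<in>Pow (K - I).
        gsign (I \<union> J) (K - I - J) * gsign I J * a I * b J * c (K - I - J))"
        by (rule sub_reindex[OF fin, of "\<lambda>I J M. gsign (I \<union> J) M * gsign I J * a I * b J * c M"])
      finally show ?thesis .
    qed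
    also have "\<dots> = (\<Sum>I\<in>Pow K. \<Sum>J\<in>Pow (K - I).
        gsign I (K - I) * gsign J (K - I - J) * a I * b J * c (K - I - J))"
    proof (intro sum.cong refl)
      fix I J assume I: "I \<in> Pow K" and J: "J \<in> Pow (K - I)"
      have fI: "finite I" "finite J" "finite (K - I - J)" using I J fin by (auto dest: finite_subset)
      have e: "K - I = J \<union> (K - I - J)" using J by auto
      have "gsign I (K - I) = gsign I J * gsign I (K - I - J)"
        using gsign_union_right[OF fI] fI(1) J e by (metis Diff_disjoint)
      moreover have "gsign (I \<union> J) (K - I - J) = gsign I (K - I - J) * gsign J (K - I - J)"
        using gsign_union_left[OF fI] J by auto
      ultimately have "gsign (I \<union> J) (K - I - J) * gsign I J = gsign I (K - I) * gsign J (K - I - J)"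
        by (simp add: algebra_simps)
      thus "gsign (I \<union> J) (K - I - J) * gsign I J * a I * b J * c (K - I - J) =
        gsign I (K - I) * gsign J (K - I - J) * a I * b J * c (K - I - J)" by simp
    qed
    also have "\<dots> = gmult a (gmult b c) K"
      unfolding gmult_def2[of a]
      by (rule sum.cong[OF refl]) (auto simp: gmult_def2 sum_distrib_left mult.assoc mult.left_commute)
    finally show ?thesis .
  qed
qed

definition par :: "nat \<Rightarrow> gr \<Rightarrow> bool" where
  "par p a \<longleftrightarrow> (\<forall>I. a I \<noteq> 0 \<longrightarrow> card I mod 2 = p mod 2)"
definition supp :: "nat \<Rightarrow> gr \<Rightarrow> bool" where
  "supp m a \<longleftrightarrow> (\<forall>I. a I \<noteq> 0 \<longrightarrow> I \<subseteq> {..<m})"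
definition dg :: "nat \<Rightarrow> gr \<Rightarrow> bool" where
  "dg d a \<longleftrightarrow> (\<forall>I. a I \<noteq> 0 \<longrightarrow> d \<le> card I)"

lemma gscale_apply[simp]: "gscale c a I = c * a I" by (simp add: gscale_def)
lemma gone_apply: "gone I = (if I = {} then 1 else 0)" by (simp add: gone_def)
lemma gsoul_apply: "gsoul a I = (if I = {} then 0 else a I)" by (simp add: gsoul_def)

lemma gsign_empty_left[simp]: "gsign {} J = 1" by (simp add: gsign_def)
lemma gsign_empty_right[simp]: "gsign I {} = 1" by (simp add: gsign_def)

lemma gmult_add_left: "gmult (a + b) c = gmult a c + gmult b c"
  by (rule ext) (simp add: gmult_def2 algebra_simps sum.distrib)
lemma gmult_add_right: "gmult a (b + c) = gmult a b + gmult a c"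
  by (rule ext) (simp add: gmult_def2 algebra_simps sum.distrib)
lemma gmult_diff_left: "gmult (a - b) c = gmult a c - gmult b c"
  by (rule ext) (simp add: gmult_def2 algebra_simps sum_subtractf)
lemma gmult_diff_right: "gmult a (b - c) = gmult a b - gmult a c"
  by (rule ext) (simp add: gmult_def2 algebra_simps sum_subtractf)
lemma gmult_zero_left[simp]: "gmult 0 c = 0"
  by (rule ext) (simp add: gmult_def2)
lemma gmult_zero_right[simp]: "gmult a 0 = 0"
  by (rule ext) (simp add: gmult_def2)
lemma gmult_scale_left: "gmult (gscale c a) b = gscale c (gmult a b)"
  by (rule ext) (simp add: gmult_def2 sum_distrib_left mult_ac)
lemma gmult_scale_right: "gmult a (gscale c b) = gscale c (gmult a b)"
  by (rule ext) (simp add: gmult_def2 sum_distrib_left mult_ac)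
lemma gmult_sum_left: "gmult (\<Sum>k\<in>A. f k) c = (\<Sum>k\<in>A. gmult (f k) c)"
proof
  fix K
  have "gmult (\<Sum>k\<in>A. f k) c K = (\<Sum>I\<in>Pow K. \<Sum>k\<in>A. gsign I (K - I) * f k I * c (K - I))"
    by (simp add: gmult_def2 gsum_apply sum_distrib_left sum_distrib_right)
  also have "\<dots> = (\<Sum>k\<in>A. \<Sum>I\<in>Pow K. gsign I (K - I) * f k I * c (K - I))"
    by (rule sum.swap)
  finally show "gmult (\<Sum>k\<in>A. f k) c K = (\<Sum>k\<in>A. gmult (f k) c) K"
    by (simp add: gmult_def2 gsum_apply)
qed
lemma gmult_sum_right: "gmult c (\<Sum>k\<in>A. f k) = (\<Sum>k\<in>A. gmult c (f k))"
proof
  fix K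
  have "gmult c (\<Sum>k\<in>A. f k) K = (\<Sum>I\<in>Pow K. \<Sum>k\<in>A. gsign I (K - I) * c I * f k (K - I))"
    by (simp add: gmult_def2 gsum_apply sum_distrib_left sum_distrib_right)
  also have "\<dots> = (\<Sum>k\<in>A. \<Sum>I\<in>Pow K. gsign I (K - I) * c I * f k (K - I))"
    by (rule sum.swap)
  finally show "gmult c (\<Sum>k\<in>A. f k) K = (\<Sum>k\<in>A. gmult c (f k)) K"
    by (simp add: gmult_def2 gsum_apply)
qed
lemma gscale_add: "gscale c (a + b) = gscale c a + gscale c b"
  by (rule ext) (simp add: algebra_simps)
lemma gscale_diff: "gscale c (a - b) = gscale c a - gscale c b"
  by (rule ext) (simp add: algebra_simps)
lemma gscale_gscale[simp]: "gscale c (gscale d a) = gscale (c * d) a"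
  by (rule ext) simp
lemma gscale_one[simp]: "gscale 1 a = a" by (rule ext) simp
lemma gscale_zero[simp]: "gscale 0 a = 0" "gscale c 0 = 0" by (auto intro!: ext)
lemma gscale_sum: "gscale c (\<Sum>k\<in>A. f k) = (\<Sum>k\<in>A. gscale c (f k))"
  by (rule ext) (simp add: gsum_apply sum_distrib_left)
lemma gscale_add_left: "gscale (c + d) a = gscale c a + gscale d a"
  by (rule ext) (simp add: algebra_simps)
lemma gscale_sum_left: "gscale (\<Sum>k\<in>A. f k) a = (\<Sum>k\<in>A. gscale (f k) a)"
  by (rule ext) (simp add: gsum_apply sum_distrib_right)

lemma supp_finite: "supp m a \<Longrightarrow> a I \<noteq> 0 \<Longrightarrow> finite I"
  unfolding supp_def by (meson finite_lessThan finite_subset)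

lemma gmult_gone_left_apply: "gmult gone a K = (if finite K then a K else 0)"
proof (cases "finite K")
  case False thus ?thesis using gmult_infinite by metis
next
  case True
  have "gmult gone a K = (\<Sum>I\<in>{{}}. gsign I (K - I) * gone I * a (K - I))"
    unfolding gmult_def2 by (rule sum.mono_neutral_right) (use True in \<open>auto simp: gone_def\<close>)
  thus ?thesis using True by (simp add: gone_def)
qed

lemma gmult_gone_right_apply: "gmult a gone K = (if finite K then a K else 0)"
proof (cases "finite K")
  case False thus ?thesis using gmult_infinite by metis
next
  case True
  have "gmult a gone K = (\<Sum>I\<in>{K}. gsign I (K - I) * a I * gone (K - I))"
    unfolding gmult_def2 by (rule sum.mono_neutral_right) (use True in \<open>auto simp: gone_def\<close>)
  thus ?thesis using True by (simp add: gone_def)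
qed

lemma gmult_gone_comm: "gmult a gone = gmult gone a"
  by (rule ext) (simp add: gmult_gone_left_apply gmult_gone_right_apply)

lemma gmult_gone_left: "supp m a \<Longrightarrow> gmult gone a = a"
  by (rule ext) (auto simp: gmult_gone_left_apply dest: supp_finite)

lemma gmult_gone_right: "supp m a \<Longrightarrow> gmult a gone = a"
  by (rule ext) (auto simp: gmult_gone_right_apply dest: supp_finite)

lemma gmult_nonzero:
  assumes "gmult a b K \<noteq> 0"
  obtains I where "finite K" "I \<subseteq> K" "a I \<noteq> 0" "b (K - I) \<noteq> 0"
proof -
  have "finite K" using assms gmult_infinite by metis
  moreover from assms obtain I where "I \<in> Pow K" "gsign I (K - I) * a I * b (K - I) \<noteq> 0"
    unfolding gmult_def2 by (meson sum.not_neutral_contains_not_neutral)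
  ultimately show ?thesis using that by auto
qed

lemma par_gmult: "par p a \<Longrightarrow> par q b \<Longrightarrow> par (p + q) (gmult a b)"
  unfolding par_def
proof (intro allI impI)
  fix K assume pa: "\<forall>I. a I \<noteq> 0 \<longrightarrow> card I mod 2 = p mod 2"
    and pb: "\<forall>I. b I \<noteq> 0 \<longrightarrow> card I mod 2 = q mod 2" and nz: "gmult a b K \<noteq> 0"
  from nz obtain I where I: "finite K" "I \<subseteq> K" "a I \<noteq> 0" "b (K - I) \<noteq> 0" by (rule gmult_nonzero)
  have "card K = card I + card (K - I)"
    using I by (metis card_Diff_subset card_mono diff_add_inverse finite_subset le_add_diff_inverse)
  thus "card K mod 2 = (p + q) mod 2" using pa pb I by (metis mod_add_eq)
qed

lemma supp_gmult: "supp m a \<Longrightarrow> supp m b \<Longrightarrow> supp m (gmult a b)"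
  unfolding supp_def
proof (intro allI impI)
  fix K assume sa: "\<forall>I. a I \<noteq> 0 \<longrightarrow> I \<subseteq> {..<m}" and sb: "\<forall>I. b I \<noteq> 0 \<longrightarrow> I \<subseteq> {..<m}"
    and nz: "gmult a b K \<noteq> 0"
  from nz obtain I where I: "finite K" "I \<subseteq> K" "a I \<noteq> 0" "b (K - I) \<noteq> 0" by (rule gmult_nonzero)
  thus "K \<subseteq> {..<m}" using sa sb by blast
qed

lemma dg_gmult: "dg d a \<Longrightarrow> dg e b \<Longrightarrow> dg (d + e) (gmult a b)"
  unfolding dg_def
proof (intro allI impI)
  fix K assume sa: "\<forall>I. a I \<noteq> 0 \<longrightarrow> d \<le> card I" and sb: "\<forall>I. b I \<noteq> 0 \<longrightarrow> e \<le> card I"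
    and nz: "gmult a b K \<noteq> 0"
  from nz obtain I where I: "finite K" "I \<subseteq> K" "a I \<noteq> 0" "b (K - I) \<noteq> 0" by (rule gmult_nonzero)
  have "card K = card I + card (K - I)"
    using I by (metis card_Diff_subset card_mono diff_add_inverse finite_subset le_add_diff_inverse)
  thus "d + e \<le> card K" using sa sb I by fastforce
qed

lemma supp_gone: "supp m gone" by (simp add: supp_def gone_def)
lemma par_gone: "par 0 gone" by (simp add: par_def gone_def)
lemma dg_gone: "dg 0 gone" by (simp add: dg_def)
lemma supp_gpow: "supp m a \<Longrightarrow> supp m (gpow a k)"
  by (induction k) (auto simp: supp_gone supp_gmult)
lemma dg_gpow: "dg d a \<Longrightarrow> dg (k * d) (gpow a k)"
  by (induction k) (auto simp: dg_gone dg_gmult)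
lemma par_gpow0: "par 0 a \<Longrightarrow> par 0 (gpow a k)"
  by (induction k) (auto simp: par_gone dest: par_gmult)

lemma gpow_nil:
  assumes "supp m a" "dg 1 a" "m < k"
  shows "gpow a k = 0"
proof
  fix I
  show "gpow a k I = 0 I"
  proof (rule ccontr)
    assume "gpow a k I \<noteq> 0 I"
    hence nz: "gpow a k I \<noteq> 0" by simp
    have "k \<le> card I" using dg_gpow[OF assms(2), of k] nz by (simp add: dg_def)
    moreover have "I \<subseteq> {..<m}" using supp_gpow[OF assms(1), of k] nz by (simp add: supp_def)
    hence "card I \<le> m" by (metis card_lessThan card_mono finite_lessThan)
    ultimately show False using assms(3) by simp
  qed
qed

lemma gpow_Suc_right: "gpow a (Suc k) = gmult (gpow a k) a"
proof (induction k)
  case 0 show ?case by (simp add: gmult_gone_comm)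
next
  case (Suc k)
  have "gpow a (Suc (Suc k)) = gmult a (gmult (gpow a k) a)" using Suc by simp
  also have "\<dots> = gmult (gpow a (Suc k)) a" by (simp add: gmult_assoc)
  finally show ?case .
qed

lemma m1pow_mod: "(-1::complex) ^ n = (-1) ^ (n mod 2)"
  by (simp add: minus_one_power_iff)

lemma gmult_swap_form:
  assumes "finite K"
  shows "gmult b a K = (\<Sum>I\<in>Pow K. gsign (K - I) I * b (K - I) * a I)"
  unfolding gmult_def2
  by (rule sum.reindex_bij_witness[of _ "\<lambda>I. K - I" "\<lambda>I. K - I"]) (auto simp: double_diff)

lemma gsign_swap':
  "finite I \<Longrightarrow> finite J \<Longrightarrow> I \<inter> J = {} \<Longrightarrow>
   gsign I J = (-1) ^ (card I * card J) * gsign J I"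
  using gsign_swap[of I J] gsign_sq[of J I] by (metis mult.assoc mult.right_neutral)

lemma gmult_comm_gen:
  assumes "\<And>I J. a I \<noteq> 0 \<Longrightarrow> b J \<noteq> 0 \<Longrightarrow> finite I \<Longrightarrow> finite J \<Longrightarrow>
        (-1::complex) ^ (card I * card J) = s"
  shows "gmult a b = gscale s (gmult b a)"
proof
  fix K
  show "gmult a b K = gscale s (gmult b a) K"
  proof (cases "finite K")
    case False thus ?thesis by (simp add: gmult_infinite)
  next
    case True
    have eq: "gmult b a K = (\<Sum>I\<in>Pow K. gsign (K - I) I * b (K - I) * a I)"
      by (rule gmult_swap_form[OF True])
    show ?thesis
      unfolding gscale_apply eq gmult_def2[of a b] sum_distrib_left
    proof (rule sum.cong[OF refl])
      fix I assume I: "I \<in> Pow K"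
      have f: "finite I" "finite (K - I)" using I True by (auto dest: finite_subset)
      show "gsign I (K - I) * a I * b (K - I) = s * (gsign (K - I) I * b (K - I) * a I)"
      proof (cases "a I \<noteq> 0 \<and> b (K - I) \<noteq> 0")
        case True
        hence "(-1::complex) ^ (card I * card (K - I)) = s" using assms f by blast
        thus ?thesis using gsign_swap'[of I "K - I"] f by simp
      next
        case False thus ?thesis by auto
      qed
    qed
  qed
qed

lemma gmult_comm_par:
  assumes "par p a" "par q b"
  shows "gmult a b = gscale ((-1) ^ (p * q)) (gmult b a)"
proof (rule gmult_comm_gen)
  fix I J assume "a I \<noteq> 0" "b J \<noteq> 0"
  hence "card I mod 2 = p mod 2" "card J mod 2 = q mod 2" using assms by (auto simp: par_def)
  hence "(card I * card J) mod 2 = (p * q) mod 2" by (metis mod_mult_eq)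
  thus "(-1::complex) ^ (card I * card J) = (-1) ^ (p * q)" by (metis m1pow_mod)
qed

lemma gmult_comm_ev:
  assumes "par 0 a"
  shows "gmult a b = gmult b a"
proof -
  have "gmult a b = gscale 1 (gmult b a)"
  proof (rule gmult_comm_gen)
    fix I J assume "a I \<noteq> 0" "b J \<noteq> 0"
    hence "even (card I)" using assms by (auto simp: par_def)
    thus "(-1::complex) ^ (card I * card J) = 1" by simp
  qed
  thus ?thesis by simp
qed

lemma gmult_comm_ev2:
  assumes "par 0 b"
  shows "gmult a b = gmult b a"
  using gmult_comm_ev[OF assms] by simp

lemma par_add: "par p a \<Longrightarrow> par p b \<Longrightarrow> par p (a + b)"
  unfolding par_def
proof (intro allI impI)
  fix I assume "\<forall>I. a I \<noteq> 0 \<longrightarrow> card I mod 2 = p mod 2" "\<forall>I. b I \<noteq> 0 \<longrightarrow> card I mod 2 = p mod 2"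
    "(a + b) I \<noteq> 0"
  moreover have "a I \<noteq> 0 \<or> b I \<noteq> 0" using \<open>(a + b) I \<noteq> 0\<close> by auto
  ultimately show "card I mod 2 = p mod 2" by blast
qed
lemma par_diff: "par p a \<Longrightarrow> par p b \<Longrightarrow> par p (a - b)"
  unfolding par_def
proof (intro allI impI)
  fix I assume "\<forall>I. a I \<noteq> 0 \<longrightarrow> card I mod 2 = p mod 2" "\<forall>I. b I \<noteq> 0 \<longrightarrow> card I mod 2 = p mod 2"
    "(a - b) I \<noteq> 0"
  moreover have "a I \<noteq> 0 \<or> b I \<noteq> 0" using \<open>(a - b) I \<noteq> 0\<close> by auto
  ultimately show "card I mod 2 = p mod 2" by blast
qed
lemma par_zero: "par p 0" by (simp add: par_def)
lemma par_scale: "par p a \<Longrightarrow> par p (gscale c a)" by (simp add: par_def)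
lemma par_sum: "(\<And>k. k \<in> A \<Longrightarrow> par p (f k)) \<Longrightarrow> par p (\<Sum>k\<in>A. f k)"
  by (induction A rule: infinite_finite_induct) (auto simp: par_zero par_add simp del: plus_fun_apply)
lemma par_mod: "p mod 2 = q mod 2 \<Longrightarrow> par p a = par q a"
  by (simp add: par_def)

lemma supp_add: "supp m a \<Longrightarrow> supp m b \<Longrightarrow> supp m (a + b)"
  unfolding supp_def
proof (intro allI impI)
  fix I assume "\<forall>I. a I \<noteq> 0 \<longrightarrow> I \<subseteq> {..<m}" "\<forall>I. b I \<noteq> 0 \<longrightarrow> I \<subseteq> {..<m}"
    "(a + b) I \<noteq> 0"
  moreover have "a I \<noteq> 0 \<or> b I \<noteq> 0" using \<open>(a + b) I \<noteq> 0\<close> by auto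
  ultimately show "I \<subseteq> {..<m}" by blast
qed
lemma supp_diff: "supp m a \<Longrightarrow> supp m b \<Longrightarrow> supp m (a - b)"
  unfolding supp_def
proof (intro allI impI)
  fix I assume "\<forall>I. a I \<noteq> 0 \<longrightarrow> I \<subseteq> {..<m}" "\<forall>I. b I \<noteq> 0 \<longrightarrow> I \<subseteq> {..<m}"
    "(a - b) I \<noteq> 0"
  moreover have "a I \<noteq> 0 \<or> b I \<noteq> 0" using \<open>(a - b) I \<noteq> 0\<close> by auto
  ultimately show "I \<subseteq> {..<m}" by blast
qed
lemma supp_zero: "supp m 0" by (simp add: supp_def)
lemma supp_scale: "supp m a \<Longrightarrow> supp m (gscale c a)" by (simp add: supp_def)
lemma supp_sum: "(\<And>k. k \<in> A \<Longrightarrow> supp m (f k)) \<Longrightarrow> supp m (\<Sum>k\<in>A. f k)"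
  by (induction A rule: infinite_finite_induct) (auto simp: supp_zero supp_add simp del: plus_fun_apply)
lemma supp_soul: "supp m a \<Longrightarrow> supp m (gsoul a)" by (simp add: supp_def gsoul_def)
lemma dg_soul: "supp m a \<Longrightarrow> dg 1 (gsoul a)"
  unfolding dg_def
proof (intro allI impI)
  fix I assume s: "supp m a" and nz: "gsoul a I \<noteq> 0"
  hence "I \<noteq> {}" "a I \<noteq> 0" by (auto simp: gsoul_def split: if_splits)
  moreover have "finite I" using supp_finite[OF s] \<open>a I \<noteq> 0\<close> by blast
  ultimately show "1 \<le> card I" by (simp add: Suc_leI card_gt_0_iff)
qed
lemma dg_scale: "dg d a \<Longrightarrow> dg d (gscale c a)" by (simp add: dg_def)
lemma par_soul: "par p a \<Longrightarrow> par p (gsoul a)" by (simp add: par_def gsoul_def)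

lemma gmult_empty: "gmult a b {} = a {} * b {}"
  by (simp add: gmult_def2)

lemma gpow_empty: "gpow a k {} = a {} ^ k"
  by (induction k) (auto simp: gmult_empty gone_def)

lemma soul_decomp: "a = gscale (a {}) gone + gsoul a"
  by (rule ext) (simp add: gone_def gsoul_def)

lemma sum_telescope_gr: "(\<Sum>k\<le>n. f k - f (Suc k)) = f 0 - (f (Suc n) :: gr)"
  by (induction n) (auto simp: algebra_simps)

lemma ginv_left:
  assumes s: "supp m a" and nz: "a {} \<noteq> 0"
  shows "gmult (ginv m a) a = gone"
proof -
  define c where "c = a {}"
  define u where "u = gscale (- 1 / c) (gsoul a)"
  have a: "a = gscale c (gone - u)"
    unfolding u_def c_def using nz by (rule_tac ext) (simp add: gone_def gsoul_def)
  have su: "supp m u" unfolding u_def by (intro supp_scale supp_soul s)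
  have du: "dg 1 u" unfolding u_def by (intro dg_scale dg_soul[OF s])
  have gi: "ginv m a = gscale (1 / c) (\<Sum>k\<le>m. gpow u k)"
    unfolding ginv_def u_def c_def ..
  have "gmult (ginv m a) a = gscale (1 / c) (gscale c (\<Sum>k\<le>m. gmult (gpow u k) (gone - u)))"
    unfolding gi by (subst a) (simp only: gmult_scale_left gmult_scale_right gmult_sum_left gscale_gscale mult.commute)
  also have "\<dots> = (\<Sum>k\<le>m. gmult (gpow u k) (gone - u))"
    using nz unfolding c_def by simp
  also have "\<dots> = (\<Sum>k\<le>m. gpow u k - gpow u (Suc k))"
    using nz unfolding c_def
    by (simp add: gmult_diff_right gmult_gone_right[OF supp_gpow[OF su]] gpow_Suc_right[symmetric])
  also have "\<dots> = gone"
    using gpow_nil[OF su du, of "Suc m"] by (subst sum_telescope_gr) simp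
  finally show ?thesis .
qed

lemma par_ginv: "par 0 a \<Longrightarrow> par 0 (ginv m a)"
  unfolding ginv_def by (intro par_scale par_sum par_gpow0 par_soul)

lemma supp_ginv: "supp m a \<Longrightarrow> supp m (ginv m a)"
  unfolding ginv_def by (intro supp_scale supp_sum supp_gpow supp_soul)

lemma ginv_right:
  assumes s: "supp m a" and nz: "a {} \<noteq> 0" and p: "par 0 a"
  shows "gmult a (ginv m a) = gone"
  using ginv_left[OF s nz] gmult_comm_ev[OF p] by simp

lemma gmult_cancel_left:
  assumes s: "supp m a" and nz: "a {} \<noteq> 0" and e: "gmult a b = gmult a c"
    and sb: "supp m b" and sc: "supp m c"
  shows "b = c"
proof -
  have "gmult (gmult (ginv m a) a) b = gmult (gmult (ginv m a) a) c"
    using e by (simp add: gmult_assoc)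
  thus ?thesis using ginv_left[OF s nz] gmult_gone_left[OF sb] gmult_gone_left[OF sc] by simp
qed

lemma gexp_empty: "gexp m a {} = exp (a {})"
proof -
  have z: "(\<Sum>k\<le>m. (0::complex) ^ k / fact k) = 1" by (induction m) auto
  show ?thesis by (simp add: gexp_def gsum_apply gpow_empty gsoul_def z)
qed

lemma supp_gexp: "supp m a \<Longrightarrow> supp m (gexp m a)"
  unfolding gexp_def by (intro supp_scale supp_sum supp_gpow supp_soul)
lemma par_gexp: "par 0 a \<Longrightarrow> par 0 (gexp m a)"
  unfolding gexp_def by (intro par_scale par_sum par_gpow0 par_soul)

definition line :: "(real^'n::finite \<Rightarrow> complex) \<Rightarrow> real^'n \<Rightarrow> 'n \<Rightarrow> real \<Rightarrow> complex" where
  "line f x a = (\<lambda>s. f (x + s *\<^sub>R axis a 1))"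

lemma pd_line: "pd a f x = vector_derivative (line f x a) (at 0)"
  by (simp add: pd_def line_def)

lemma line_diff:
  assumes "f differentiable (at x)"
  shows "line f x a differentiable (at 0)"
proof -
  have "(\<lambda>s::real. x + s *\<^sub>R axis a 1) differentiable (at 0)"
    by (intro derivative_intros differentiable_add differentiable_const differentiable_scaleR differentiable_ident)
  moreover have "f differentiable at ((\<lambda>s::real. x + s *\<^sub>R axis a 1) 0)" using assms by simp
  ultimately have "f \<circ> (\<lambda>s::real. x + s *\<^sub>R axis a 1) differentiable (at 0)"
    by (rule differentiable_chain_at)
  thus ?thesis by (simp add: line_def o_def)
qed

lemma pd_has:
  assumes "f differentiable (at x)"
  shows "(line f x a has_vector_derivative pd a f x) (at 0)"
  using line_diff[OF assms] by (simp add: pd_line vector_derivative_works)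

lemma pd_eqI:
  "(line f x a has_vector_derivative d) (at 0) \<Longrightarrow> pd a f x = d"
  by (simp add: pd_line vector_derivative_at)

lemma line_at0: "line f x a 0 = f x" by (simp add: line_def)

lemma pd_add:
  "f differentiable (at x) \<Longrightarrow> g differentiable (at x) \<Longrightarrow>
   pd a (\<lambda>y. f y + g y) x = pd a f x + pd a g x"
  by (rule pd_eqI) (unfold line_def, rule has_vector_derivative_add[OF pd_has[unfolded line_def] pd_has[unfolded line_def]])

lemma pd_diff:
  "f differentiable (at x) \<Longrightarrow> g differentiable (at x) \<Longrightarrow>
   pd a (\<lambda>y. f y - g y) x = pd a f x - pd a g x"
  by (rule pd_eqI) (unfold line_def, rule has_vector_derivative_diff[OF pd_has[unfolded line_def] pd_has[unfolded line_def]])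

lemma pd_mult:
  assumes "f differentiable (at x)" "g differentiable (at x)"
  shows "pd a (\<lambda>y. f y * g y) x = pd a f x * g x + f x * pd a g x"
proof (rule pd_eqI)
  have "((\<lambda>s. line f x a s * line g x a s) has_vector_derivative
     line f x a 0 * pd a g x + pd a f x * line g x a 0) (at 0)"
    using has_vector_derivative_mult[OF pd_has[OF assms(1)] pd_has[OF assms(2)]] by simp
  thus "(line (\<lambda>y. f y * g y) x a has_vector_derivative pd a f x * g x + f x * pd a g x) (at 0)"
    by (simp add: line_def algebra_simps)
qed

lemma pd_cmult:
  assumes "f differentiable (at x)"
  shows "pd a (\<lambda>y. c * f y) x = c * pd a f x"
proof (rule pd_eqI)
  show "(line (\<lambda>y. c * f y) x a has_vector_derivative c * pd a f x) (at 0)"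
  proof -
    have "(line f x a has_vector_derivative pd a f x) (at 0)" by (rule pd_has[OF assms])
    from has_vector_derivative_mult_right[OF this, of c] show ?thesis by (simp add: line_def)
  qed
qed

lemma pd_const: "pd a (\<lambda>y. c) x = 0"
  by (rule pd_eqI) (simp add: line_def)

lemma pd_sum:
  assumes "finite A" "\<And>k. k \<in> A \<Longrightarrow> f k differentiable (at x)"
  shows "pd a (\<lambda>y. \<Sum>k\<in>A. f k y) x = (\<Sum>k\<in>A. pd a (f k) x)"
proof (rule pd_eqI)
  show "(line (\<lambda>y. \<Sum>k\<in>A. f k y) x a has_vector_derivative (\<Sum>k\<in>A. pd a (f k) x)) (at 0)"
    using has_vector_derivative_sum[of A "\<lambda>k. line (f k) x a" "\<lambda>k. pd a (f k) x" "at 0"]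
      pd_has[OF assms(2)] by (simp add: line_def)
qed

lemma pd_exp:
  assumes "f differentiable (at x)"
  shows "pd a (\<lambda>y. exp (f y)) x = exp (f x) * pd a f x"
proof (rule pd_eqI)
  have "(exp \<circ> line f x a has_vector_derivative pd a f x * exp (line f x a 0)) (at 0)"
    by (rule field_vector_diff_chain_at[OF pd_has[OF assms]]) (rule DERIV_exp)
  thus "(line (\<lambda>y. exp (f y)) x a has_vector_derivative exp (f x) * pd a f x) (at 0)"
    by (simp add: line_def o_def mult.commute)
qed

lemma pd_inv:
  assumes "f differentiable (at x)" "f x \<noteq> 0"
  shows "pd a (\<lambda>y. 1 / f y) x = - pd a f x * (1 / f x) * (1 / f x)"
proof (rule pd_eqI)
  have "((\<lambda>z. 1 / z) \<circ> line f x a has_vector_derivative pd a f x * (- 1 / (line f x a 0)^2)) (at 0)"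
    by (rule field_vector_diff_chain_at[OF pd_has[OF assms(1)]])
       (use assms(2) in \<open>auto intro!: derivative_eq_intros simp: line_def power2_eq_square field_simps\<close>)
  thus "(line (\<lambda>y. 1 / f y) x a has_vector_derivative - pd a f x * (1 / f x) * (1 / f x)) (at 0)"
    by (simp add: line_def o_def power2_eq_square field_simps)
qed

lemma pd_local:
  assumes U: "open U" "x \<in> U" and eq: "\<And>y. y \<in> U \<Longrightarrow> f y = g y"
  shows "pd a f x = pd a g x"
proof -
  obtain r where r: "r > 0" "ball x r \<subseteq> U" using U openE by blast
  have ev: "\<forall>\<^sub>F s in nhds 0. s \<in> UNIV \<longrightarrow> line f x a s = line g x a s"
    unfolding eventually_nhds_metric
  proof (intro exI[of _ r] conjI allI impI r(1))
    fix s :: real assume "dist s 0 < r"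
    hence "x + s *\<^sub>R axis a 1 \<in> ball x r" by (simp add: dist_norm)
    thus "line f x a s = line g x a s" using r eq by (auto simp: line_def)
  qed
  show ?thesis unfolding pd_line by (rule vector_derivative_cong_eq[OF ev]) auto
qed

lemma diffon_cong:
  assumes "open U" "f differentiable_on U" "\<And>y. y \<in> U \<Longrightarrow> f y = g y"
  shows "g differentiable_on U"
  using assms unfolding differentiable_on_eq_differentiable_at[OF assms(1)] differentiable_def
  by (meson has_derivative_transform_within_open)

lemma pds_append: "pds (as @ [a]) f = pds as (pd a f)"
  by (induction as) auto

lemma pds_local:
  assumes U: "open U" and eq: "\<And>y. y \<in> U \<Longrightarrow> f y = g y"
  shows "y \<in> U \<Longrightarrow> pds as f y = pds as g y"
proof (induction as arbitrary: y)
  case Nil thus ?case using eq by simp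
next
  case (Cons b as)
  show ?case using pd_local[OF U Cons.prems, of "pds as f" "pds as g"] Cons.IH by simp
qed

definition Ck :: "(real^'n::finite) set \<Rightarrow> nat \<Rightarrow> (real^'n \<Rightarrow> complex) \<Rightarrow> bool" where
  "Ck U k f \<longleftrightarrow> (\<forall>as. length as \<le> k \<longrightarrow> pds as f differentiable_on U)"

lemma Ck_0: "Ck U 0 f \<longleftrightarrow> f differentiable_on U"
  by (simp add: Ck_def)

lemma Ck_Suc: "Ck U (Suc k) f \<longleftrightarrow> f differentiable_on U \<and> (\<forall>a. Ck U k (pd a f))"
proof
  assume h: "Ck U (Suc k) f"
  show "f differentiable_on U \<and> (\<forall>a. Ck U k (pd a f))"
  proof
    show "f differentiable_on U" using h[unfolded Ck_def, rule_format, of "[]"] by simp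
    show "\<forall>a. Ck U k (pd a f)" unfolding Ck_def
      using h[unfolded Ck_def] by (metis pds_append length_append_singleton not_less_eq_eq)
  qed
next
  assume h: "f differentiable_on U \<and> (\<forall>a. Ck U k (pd a f))"
  show "Ck U (Suc k) f" unfolding Ck_def
  proof (intro allI impI)
    fix as :: "'a list" assume l: "length as \<le> Suc k"
    show "pds as f differentiable_on U"
    proof (cases as rule: rev_exhaust)
      case Nil thus ?thesis using h by simp
    next
      case (snoc bs a)
      thus ?thesis using h l unfolding Ck_def by (auto simp: pds_append)
    qed
  qed
qed

lemma smooth_Ck: "smooth_on U f \<longleftrightarrow> (\<forall>k. Ck U k f)"
  by (auto simp: smooth_on_def Ck_def)

lemma Ck_Suc_mono: "Ck U (Suc k) f \<Longrightarrow> Ck U k f"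
  by (auto simp: Ck_def)

lemma Ck_diff_at: "open U \<Longrightarrow> Ck U k f \<Longrightarrow> x \<in> U \<Longrightarrow> f differentiable (at x)"
  by (auto simp: Ck_def differentiable_on_eq_differentiable_at dest: spec[of _ "[]"])

lemma Ck_cong:
  assumes "open U" shows "Ck U k f \<Longrightarrow> (\<And>y. y \<in> U \<Longrightarrow> f y = g y) \<Longrightarrow> Ck U k g"
proof (induction k arbitrary: f g)
  case 0 then show ?case unfolding Ck_0 using diffon_cong[OF assms] by blast
next
  case (Suc k)
  show ?case unfolding Ck_Suc
  proof
    show "g differentiable_on U" using Suc.prems diffon_cong[OF assms] unfolding Ck_Suc by blast
    show "\<forall>a. Ck U k (pd a g)"
    proof
      fix a
      show "Ck U k (pd a g)"
        by (rule Suc.IH[of "pd a f"]) (use Suc.prems in \<open>auto simp: Ck_Suc intro: pd_local[OF assms]\<close>)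
    qed
  qed
qed

lemma Ck_const: "Ck U k (\<lambda>y. c)"
proof (induction k arbitrary: c)
  case 0 thus ?case by (simp add: Ck_0)
next
  case (Suc k)
  have e: "pd a (\<lambda>y. c) = (\<lambda>y. 0)" for a by (rule ext) (rule pd_const)
  show ?case unfolding Ck_Suc e using Suc.IH[of 0] by simp
qed

lemma Ck_add:
  assumes U: "open U"
  shows "Ck U k f \<Longrightarrow> Ck U k g \<Longrightarrow> Ck U k (\<lambda>y. f y + g y)"
proof (induction k arbitrary: f g)
  case 0 thus ?case by (simp add: Ck_0 differentiable_on_add)
next
  case (Suc k)
  show ?case unfolding Ck_Suc
  proof (intro conjI allI)
    show "(\<lambda>y. f y + g y) differentiable_on U" using Suc.prems by (simp add: Ck_Suc differentiable_on_add)
    fix a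
    have "Ck U k (\<lambda>y. pd a f y + pd a g y)" using Suc by (simp add: Ck_Suc)
    thus "Ck U k (pd a (\<lambda>y. f y + g y))"
      by (rule Ck_cong[OF U]) (rule pd_add[symmetric]; rule Ck_diff_at[OF U]; use Suc.prems in auto)
  qed
qed

lemma Ck_mult:
  assumes U: "open U"
  shows "Ck U k f \<Longrightarrow> Ck U k g \<Longrightarrow> Ck U k (\<lambda>y. f y * g y)"
proof (induction k arbitrary: f g)
  case 0 thus ?case by (simp add: Ck_0 differentiable_on_mult)
next
  case (Suc k)
  show ?case unfolding Ck_Suc
  proof (intro conjI allI)
    show "(\<lambda>y. f y * g y) differentiable_on U" using Suc.prems by (simp add: Ck_Suc differentiable_on_mult)
    fix a
    have "Ck U k (\<lambda>y. pd a f y * g y)" using Suc.IH Suc.prems by (simp add: Ck_Suc Ck_Suc_mono)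
    moreover have "Ck U k (\<lambda>y. f y * pd a g y)" using Suc.IH Suc.prems by (simp add: Ck_Suc Ck_Suc_mono)
    ultimately have "Ck U k (\<lambda>y. pd a f y * g y + f y * pd a g y)" by (rule Ck_add[OF U])
    thus "Ck U k (pd a (\<lambda>y. f y * g y))"
      by (rule Ck_cong[OF U]) (rule pd_mult[symmetric]; rule Ck_diff_at[OF U]; use Suc.prems in auto)
  qed
qed

lemma Ck_exp:
  assumes U: "open U"
  shows "Ck U k f \<Longrightarrow> Ck U k (\<lambda>y. exp (f y))"
proof (induction k arbitrary: f)
  case 0
  have "(\<lambda>y. exp (f y)) differentiable at x" if "x \<in> U" for x
  proof -
    have "f differentiable at x" using 0 that Ck_diff_at[OF U] by blast
    moreover have "exp differentiable at (f x)"
      using DERIV_exp field_differentiable_def field_differentiable_imp_differentiable by blast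
    ultimately show ?thesis using differentiable_chain_at[of f x exp] by (simp add: o_def)
  qed
  thus ?case by (simp add: Ck_0 differentiable_on_eq_differentiable_at[OF U])
next
  case (Suc k)
  show ?case unfolding Ck_Suc
  proof (intro conjI allI)
    show "(\<lambda>y. exp (f y)) differentiable_on U"
    proof -
      have "(\<lambda>y. exp (f y)) differentiable at x" if "x \<in> U" for x
      proof -
        have "f differentiable at x" using Suc.prems that Ck_diff_at[OF U] by blast
        moreover have "exp differentiable at (f x)"
          using DERIV_exp field_differentiable_def field_differentiable_imp_differentiable by blast
        ultimately show ?thesis using differentiable_chain_at[of f x exp] by (simp add: o_def)
      qed
      thus ?thesis by (simp add: differentiable_on_eq_differentiable_at[OF U])
    qed
    fix a
    have "Ck U k (\<lambda>y. exp (f y) * pd a f y)"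
      using Suc.IH[of f] Suc.prems by (intro Ck_mult[OF U]) (auto simp: Ck_Suc Ck_Suc_mono)
    thus "Ck U k (pd a (\<lambda>y. exp (f y)))"
      by (rule Ck_cong[OF U]) (rule pd_exp[symmetric]; rule Ck_diff_at[OF U]; use Suc.prems in auto)
  qed
qed

lemma Ck_inv:
  assumes U: "open U" and nz: "\<And>y. y \<in> U \<Longrightarrow> f y \<noteq> 0"
  shows "Ck U k f \<Longrightarrow> Ck U k (\<lambda>y. 1 / f y)"
proof (induction k)
  case 0
  have "(\<lambda>y. 1 / f y) differentiable at x" if "x \<in> U" for x
    using Ck_diff_at[OF U 0 that] nz[OF that] by (intro differentiable_divide) auto
  thus ?case by (simp add: Ck_0 differentiable_on_eq_differentiable_at[OF U])
next
  case (Suc k)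
  show ?case unfolding Ck_Suc
  proof (intro conjI allI)
    have "(\<lambda>y. 1 / f y) differentiable at x" if "x \<in> U" for x
      using Ck_diff_at[OF U Suc.prems that] nz[OF that] by (intro differentiable_divide) auto
    thus "(\<lambda>y. 1 / f y) differentiable_on U" by (simp add: differentiable_on_eq_differentiable_at[OF U])
    fix a
    have i: "Ck U k (\<lambda>y. 1 / f y)" using Suc.IH Suc.prems Ck_Suc_mono by blast
    have "Ck U k (\<lambda>y. (- pd a f y * (1 / f y)) * (1 / f y))"
    proof (intro Ck_mult[OF U] i)
      have "Ck U k (\<lambda>y. (- 1) * pd a f y)" using Suc.prems by (intro Ck_mult[OF U] Ck_const) (auto simp: Ck_Suc)
      thus "Ck U k (\<lambda>y. - pd a f y)" by simp
    qed
    thus "Ck U k (pd a (\<lambda>y. 1 / f y))"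
      by (rule Ck_cong[OF U]) (rule pd_inv[symmetric]; use Ck_diff_at[OF U] Suc.prems nz in auto)
  qed
qed

lemma Ck_sum:
  assumes U: "open U"
  shows "(\<And>i. i \<in> A \<Longrightarrow> Ck U k (f i)) \<Longrightarrow> Ck U k (\<lambda>y. \<Sum>i\<in>A. f i y)"
proof (induction A rule: infinite_finite_induct)
  case (infinite A) thus ?case by (simp add: Ck_const)
next
  case empty thus ?case by (simp add: Ck_const)
next
  case (insert i A) thus ?case by (simp add: Ck_add[OF U])
qed

lemma Ck_pd: "Ck U (Suc k) f \<Longrightarrow> Ck U k (pd a f)"
  by (simp add: Ck_Suc)

lemma smooth_const: "smooth_on U (\<lambda>y. c)" by (simp add: smooth_Ck Ck_const)
lemma smooth_add: "open U \<Longrightarrow> smooth_on U f \<Longrightarrow> smooth_on U g \<Longrightarrow> smooth_on U (\<lambda>y. f y + g y)"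
  by (simp add: smooth_Ck Ck_add)
lemma smooth_mult: "open U \<Longrightarrow> smooth_on U f \<Longrightarrow> smooth_on U g \<Longrightarrow> smooth_on U (\<lambda>y. f y * g y)"
  by (simp add: smooth_Ck Ck_mult)
lemma smooth_exp: "open U \<Longrightarrow> smooth_on U f \<Longrightarrow> smooth_on U (\<lambda>y. exp (f y))"
  by (simp add: smooth_Ck Ck_exp)
lemma smooth_inv: "open U \<Longrightarrow> (\<And>y. y \<in> U \<Longrightarrow> f y \<noteq> 0) \<Longrightarrow> smooth_on U f \<Longrightarrow> smooth_on U (\<lambda>y. 1 / f y)"
  by (simp add: smooth_Ck Ck_inv)
lemma smooth_sum: "open U \<Longrightarrow> (\<And>i. i \<in> A \<Longrightarrow> smooth_on U (f i)) \<Longrightarrow> smooth_on U (\<lambda>y. \<Sum>i\<in>A. f i y)"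
  by (simp add: smooth_Ck Ck_sum)
lemma smooth_pd: "smooth_on U f \<Longrightarrow> smooth_on U (pd a f)"
  by (simp add: smooth_Ck Ck_pd)
lemma smooth_cong: "open U \<Longrightarrow> smooth_on U f \<Longrightarrow> (\<And>y. y \<in> U \<Longrightarrow> f y = g y) \<Longrightarrow> smooth_on U g"
  by (meson smooth_Ck Ck_cong)
lemma smooth_diff_at: "open U \<Longrightarrow> smooth_on U f \<Longrightarrow> x \<in> U \<Longrightarrow> f differentiable (at x)"
  by (meson smooth_Ck Ck_diff_at)
lemma smooth_cmult: "open U \<Longrightarrow> smooth_on U f \<Longrightarrow> smooth_on U (\<lambda>y. c * f y)"
  by (simp add: smooth_mult smooth_const)

definition sm :: "(real^'n::finite) set \<Rightarrow> 'n sfun \<Rightarrow> bool" where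
  "sm U F \<longleftrightarrow> (\<forall>I. smooth_on U (\<lambda>y. F y I))"

lemma sfun_sm: "sfun m U F \<Longrightarrow> sm U F" by (simp add: sfun_def sm_def)

context
  fixes U :: "(real^'n::finite) set"
  assumes U: "open U"
begin

lemma sm_cong: "sm U F \<Longrightarrow> (\<And>y. y \<in> U \<Longrightarrow> F y = G y) \<Longrightarrow> sm U G"
  unfolding sm_def using smooth_cong[OF U] by metis

lemma sm_gmult: "sm U F \<Longrightarrow> sm U G \<Longrightarrow> sm U (\<lambda>y. gmult (F y) (G y))"
  unfolding sm_def
proof (intro allI)
  fix K assume F: "\<forall>I. smooth_on U (\<lambda>y. F y I)" and G: "\<forall>I. smooth_on U (\<lambda>y. G y I)"
  show "smooth_on U (\<lambda>y. gmult (F y) (G y) K)"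
  proof (cases "finite K")
    case False thus ?thesis by (simp add: gmult_infinite smooth_const)
  next
    case True
    show ?thesis unfolding gmult_def2
      by (intro smooth_sum[OF U] smooth_mult[OF U] smooth_const F[rule_format] G[rule_format])
  qed
qed

lemma sm_add: "sm U F \<Longrightarrow> sm U G \<Longrightarrow> sm U (\<lambda>y. F y + G y)"
  by (simp add: sm_def smooth_add[OF U])
lemma sm_scale: "sm U F \<Longrightarrow> sm U (\<lambda>y. gscale c (F y))"
  by (simp add: sm_def smooth_cmult[OF U])
lemma sm_diff: "sm U F \<Longrightarrow> sm U G \<Longrightarrow> sm U (\<lambda>y. F y - G y)"
proof -
  assume F: "sm U F" and G: "sm U G"
  have eq: "(\<lambda>y. F y - G y) = (\<lambda>y. F y + gscale (-1) (G y))" by (rule ext, rule ext) simp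
  show ?thesis unfolding eq by (intro sm_add sm_scale F G)
qed
lemma sm_const: "sm U (\<lambda>y. a)" by (simp add: sm_def smooth_const)
lemma sm_zero: "sm U (\<lambda>y. 0)" by (simp add: sm_def smooth_const)
lemma sm_scale_fun: "smooth_on U c \<Longrightarrow> sm U F \<Longrightarrow> sm U (\<lambda>y. gscale (c y) (F y))"
  by (simp add: sm_def smooth_mult[OF U])
lemma sm_sum: "(\<And>i. i \<in> A \<Longrightarrow> sm U (F i)) \<Longrightarrow> sm U (\<lambda>y. \<Sum>i\<in>A. F i y)"
  by (simp add: sm_def gsum_apply smooth_sum[OF U])
lemma sm_gpow: "sm U F \<Longrightarrow> sm U (\<lambda>y. gpow (F y) k)"
  by (induction k) (simp_all add: sm_gmult sm_const)
lemma sm_soul: "sm U F \<Longrightarrow> sm U (\<lambda>y. gsoul (F y))"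
  unfolding sm_def gsoul_def
proof
  fix I assume "\<forall>I. smooth_on U (\<lambda>y. F y I)"
  thus "smooth_on U (\<lambda>y. (if I = {} then 0 else F y I))" by (cases "I = {}") (auto simp: smooth_const)
qed
lemma sm_coeff: "sm U F \<Longrightarrow> smooth_on U (\<lambda>y. F y I)"
  by (simp add: sm_def)
lemma sm_gexp: "sm U F \<Longrightarrow> sm U (\<lambda>y. gexp m (F y))"
  unfolding gexp_def
  by (intro sm_scale_fun smooth_exp[OF U] sm_coeff sm_sum sm_scale sm_gpow sm_soul)
lemma sm_ginv: "sm U F \<Longrightarrow> (\<And>y. y \<in> U \<Longrightarrow> F y {} \<noteq> 0) \<Longrightarrow> sm U (\<lambda>y. ginv m (F y))"
  unfolding ginv_def
proof (intro sm_scale_fun sm_sum sm_gpow)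
  assume F: "sm U F" and nz: "\<And>y. y \<in> U \<Longrightarrow> F y {} \<noteq> 0"
  show "smooth_on U (\<lambda>y. 1 / F y {})" by (rule smooth_inv[OF U nz sm_coeff[OF F]])
  have "smooth_on U (\<lambda>y. - 1 * (1 / F y {}))" by (intro smooth_cmult[OF U]) fact
  thus "smooth_on U (\<lambda>y. - 1 / F y {})" by simp
  show "sm U (\<lambda>y. gsoul (F y))" by (rule sm_soul[OF F])
qed

lemma dleft_Inl: "dleft (Inl a) F x J = pd a (\<lambda>y. F y J) x"
  by (simp add: dleft_def)
lemma dright_Inl: "dright (Inl a) F x J = pd a (\<lambda>y. F y J) x"
  by (simp add: dright_def)
lemma dleft_Inr: "dleft (Inr \<alpha>) F x J = (if \<alpha> \<in> J then 0 else (-1) ^ card {i\<in>J. i < \<alpha>} * F x (insert \<alpha> J))"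
  by (simp add: dleft_def)
lemma dright_Inr: "dright (Inr \<alpha>) F x J = (if \<alpha> \<in> J then 0 else (-1) ^ card {i\<in>J. \<alpha> < i} * F x (insert \<alpha> J))"
  by (simp add: dright_def)

lemma sm_dleft: "sm U F \<Longrightarrow> sm U (dleft A F)"
proof (cases A)
  case (Inl a)
  assume "sm U F" thus ?thesis unfolding sm_def Inl dleft_Inl by (auto intro: smooth_pd)
next
  case (Inr \<alpha>)
  assume F: "sm U F"
  show ?thesis unfolding sm_def Inr
  proof
    fix I show "smooth_on U (\<lambda>y. dleft (Inr \<alpha>) F y I)"
      unfolding dleft_Inr by (cases "\<alpha> \<in> I") (simp_all add: smooth_const smooth_cmult[OF U] sm_coeff[OF F])
  qed
qed

lemma sm_dright: "sm U F \<Longrightarrow> sm U (dright A F)"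
proof (cases A)
  case (Inl a)
  assume "sm U F" thus ?thesis unfolding sm_def Inl dright_Inl by (auto intro: smooth_pd)
next
  case (Inr \<alpha>)
  assume F: "sm U F"
  show ?thesis unfolding sm_def Inr
  proof
    fix I show "smooth_on U (\<lambda>y. dright (Inr \<alpha>) F y I)"
      unfolding dright_Inr by (cases "\<alpha> \<in> I") (simp_all add: smooth_const smooth_cmult[OF U] sm_coeff[OF F])
  qed
qed

lemma sm_abr:
  assumes E: "\<And>A B. sm U (E A B)" and F: "sm U F" and G: "sm U G"
  shows "sm U (abr m E F G)"
  unfolding abr_def
  by (intro sm_sum sm_gmult sm_dright sm_dleft E F G)

lemma sm_Lap:
  assumes E: "\<And>A B. sm U (E A B)" and rho: "sm U \<rho>" "\<And>y. y \<in> U \<Longrightarrow> \<rho> y {} \<noteq> 0"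
    and F: "sm U F"
  shows "sm U (Lap m \<rho> E F)"
  unfolding Lap_def
  by (intro sm_gmult sm_ginv rho sm_sum sm_scale sm_dleft E F)

lemma sm_smul: "sm U F \<Longrightarrow> sm U G \<Longrightarrow> sm U (smul F G)"
  unfolding smul_def by (rule sm_gmult)

lemma sm_commLap:
  assumes E: "\<And>A B. sm U (E A B)" and rho: "sm U \<rho>" "\<And>y. y \<in> U \<Longrightarrow> \<rho> y {} \<noteq> 0"
    and P: "sm U \<Psi>" and F: "sm U F"
  shows "sm U (commLap m \<rho> E \<Psi> F)"
  unfolding commLap_def
  by (intro sm_add sm_Lap sm_smul E rho P F)

lemma dleft_local:
  assumes x: "x \<in> U" and eq: "\<And>y. y \<in> U \<Longrightarrow> F y = G y"
  shows "dleft A F x = dleft A G x"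
proof (cases A)
  case (Inl a)
  show ?thesis unfolding Inl by (rule ext) (simp only: dleft_Inl, rule pd_local[OF U x], simp add: eq)
next
  case (Inr \<alpha>)
  show ?thesis unfolding Inr by (rule ext) (simp add: dleft_Inr eq[OF x])
qed

lemma dright_local:
  assumes x: "x \<in> U" and eq: "\<And>y. y \<in> U \<Longrightarrow> F y = G y"
  shows "dright A F x = dright A G x"
proof (cases A)
  case (Inl a)
  show ?thesis unfolding Inl by (rule ext) (simp only: dright_Inl, rule pd_local[OF U x], simp add: eq)
next
  case (Inr \<alpha>)
  show ?thesis unfolding Inr by (rule ext) (simp add: dright_Inr eq[OF x])
qed

lemma abr_local:
  assumes x: "x \<in> U" and eq: "\<And>y. y \<in> U \<Longrightarrow> G y = G' y"
  shows "abr m E F G x = abr m E F G' x"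
  unfolding abr_def using dleft_local[OF x eq] by simp

lemma abr_local1:
  assumes x: "x \<in> U" and eq: "\<And>y. y \<in> U \<Longrightarrow> F y = F' y"
  shows "abr m E F G x = abr m E F' G x"
  unfolding abr_def using dright_local[OF x eq] by simp

lemma Lap_local:
  assumes x: "x \<in> U" and eq: "\<And>y. y \<in> U \<Longrightarrow> F y = G y"
  shows "Lap m \<rho> E F x = Lap m \<rho> E G x"
proof -
  have "dleft A (\<lambda>y. gmult (\<rho> y) (gmult (E A B y) (dleft B F y))) x =
        dleft A (\<lambda>y. gmult (\<rho> y) (gmult (E A B y) (dleft B G y))) x" for A B
    by (rule dleft_local[OF x]) (simp add: dleft_local[OF _ eq])
  thus ?thesis unfolding Lap_def by simp
qed

lemma commLap_local:
  assumes x: "x \<in> U" and eq: "\<And>y. y \<in> U \<Longrightarrow> F y = G y"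
  shows "commLap m \<rho> E \<Psi> F x = commLap m \<rho> E \<Psi> G x"
proof -
  have "Lap m \<rho> E (smul \<Psi> F) x = Lap m \<rho> E (smul \<Psi> G) x"
    by (rule Lap_local[OF x]) (simp add: smul_def eq)
  moreover have "Lap m \<rho> E F x = Lap m \<rho> E G x" by (rule Lap_local[OF x eq])
  ultimately show ?thesis unfolding commLap_def smul_def by (simp add: eq[OF x])
qed

end

definition sgl :: "nat \<Rightarrow> nat set \<Rightarrow> complex" where
  "sgl \<alpha> J = (-1) ^ card {i\<in>J. i < \<alpha>}"
definition sgr :: "nat \<Rightarrow> nat set \<Rightarrow> complex" where
  "sgr \<alpha> J = (-1) ^ card {i\<in>J. \<alpha> < i}"

definition dI :: "nat \<Rightarrow> gr \<Rightarrow> gr" where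
  "dI \<alpha> a = (\<lambda>J. if \<alpha> \<in> J then 0 else sgl \<alpha> J * a (insert \<alpha> J))"
definition dIr :: "nat \<Rightarrow> gr \<Rightarrow> gr" where
  "dIr \<alpha> a = (\<lambda>J. if \<alpha> \<in> J then 0 else sgr \<alpha> J * a (insert \<alpha> J))"

lemma dleft_Inr_dI: "dleft (Inr \<alpha>) F x = dI \<alpha> (F x)"
  by (rule ext) (simp add: dleft_def dI_def sgl_def)
lemma dright_Inr_dIr: "dright (Inr \<alpha>) F x = dIr \<alpha> (F x)"
  by (rule ext) (simp add: dright_def dIr_def sgr_def)

lemma sgl_sq: "sgl \<alpha> J * sgl \<alpha> J = 1"
  by (simp add: sgl_def power_add[symmetric] flip: mult_2)

lemma sgl_union: "finite I \<Longrightarrow> finite L \<Longrightarrow> I \<inter> L = {} \<Longrightarrow> sgl \<alpha> (I \<union> L) = sgl \<alpha> I * sgl \<alpha> L"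
proof -
  assume f: "finite I" "finite L" and d: "I \<inter> L = {}"
  have "{i \<in> I \<union> L. i < \<alpha>} = {i\<in>I. i < \<alpha>} \<union> {i\<in>L. i < \<alpha>}" by auto
  moreover have "card ({i\<in>I. i < \<alpha>} \<union> {i\<in>L. i < \<alpha>}) = card {i\<in>I. i < \<alpha>} + card {i\<in>L. i < \<alpha>}"
    by (rule card_Un_disjoint) (use f d in auto)
  ultimately show ?thesis by (simp add: sgl_def power_add)
qed

lemma sgl_sgr: "finite I \<Longrightarrow> \<alpha> \<notin> I \<Longrightarrow> sgl \<alpha> I * sgr \<alpha> I = (-1) ^ card I"
proof -
  assume f: "finite I" and a: "\<alpha> \<notin> I"
  have e: "I = {i\<in>I. i < \<alpha>} \<union> {i\<in>I. \<alpha> < i}"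
  proof (rule set_eqI)
    fix i show "i \<in> I \<longleftrightarrow> i \<in> {i\<in>I. i < \<alpha>} \<union> {i\<in>I. \<alpha> < i}"
    proof
      assume i: "i \<in> I"
      hence "i \<noteq> \<alpha>" using a by blast
      hence "i < \<alpha> \<or> \<alpha> < i" by (rule linorder_neqE_nat) simp_all
      thus "i \<in> {i\<in>I. i < \<alpha>} \<union> {i\<in>I. \<alpha> < i}" using i by blast
    qed blast
  qed
  have "card ({i\<in>I. i < \<alpha>} \<union> {i\<in>I. \<alpha> < i}) = card {i\<in>I. i < \<alpha>} + card {i\<in>I. \<alpha> < i}"
    by (rule card_Un_disjoint) (use f in auto)
  hence c: "card I = card {i\<in>I. i < \<alpha>} + card {i\<in>I. \<alpha> < i}" using e by metis
  show ?thesis unfolding sgl_def sgr_def c power_add ..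
qed

lemma gsign_single_left: "finite L \<Longrightarrow> gsign {\<alpha>} L = sgl \<alpha> L"
proof -
  assume f: "finite L"
  have "card {(i, j). i \<in> {\<alpha>} \<and> j \<in> L \<and> j < i} = card {j\<in>L. j < \<alpha>}"
    by (rule bij_betw_same_card[of snd]) (auto simp: bij_betw_def inj_on_def image_def)
  thus ?thesis by (simp add: gsign_def sgl_def)
qed

lemma gsign_single_right: "finite I \<Longrightarrow> gsign I {\<alpha>} = sgr \<alpha> I"
proof -
  assume f: "finite I"
  have "card {(i, j). i \<in> I \<and> j \<in> {\<alpha>} \<and> j < i} = card {i\<in>I. \<alpha> < i}"
    by (rule bij_betw_same_card[of fst]) (auto simp: bij_betw_def inj_on_def image_def)
  thus ?thesis by (simp add: gsign_def sgr_def)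
qed

lemma gsign_insert_left:
  "finite I \<Longrightarrow> finite L \<Longrightarrow> \<alpha> \<notin> I \<Longrightarrow> \<alpha> \<notin> L \<Longrightarrow> gsign (insert \<alpha> I) L = sgl \<alpha> L * gsign I L"
  using gsign_union_left[of "{\<alpha>}" I L] gsign_single_left[of L \<alpha>] by simp

lemma gsign_insert_right:
  "finite I \<Longrightarrow> finite L \<Longrightarrow> \<alpha> \<notin> I \<Longrightarrow> \<alpha> \<notin> L \<Longrightarrow> gsign I (insert \<alpha> L) = sgr \<alpha> I * gsign I L"
  using gsign_union_right[of I "{\<alpha>}" L] gsign_single_right[of I \<alpha>] by simp

lemma par_sign: "par p a \<Longrightarrow> a I \<noteq> 0 \<Longrightarrow> (-1::complex) ^ card I = (-1) ^ p"
  unfolding par_def by (metis m1pow_mod)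

lemma sum_Pow_insert:
  assumes "finite J" "\<alpha> \<notin> J"
  shows "(\<Sum>I\<in>Pow (insert \<alpha> J). f I) = (\<Sum>I\<in>Pow J. f I) + (\<Sum>I\<in>Pow J. f (insert \<alpha> I))"
proof -
  have "(\<Sum>I\<in>Pow (insert \<alpha> J). f I) = (\<Sum>I\<in>Pow J \<union> insert \<alpha> ` Pow J. f I)"
    by (simp add: Pow_insert)
  also have "\<dots> = (\<Sum>I\<in>Pow J. f I) + (\<Sum>I\<in>insert \<alpha> ` Pow J. f I)"
    by (rule sum.union_disjoint) (use assms in auto)
  also have "(\<Sum>I\<in>insert \<alpha> ` Pow J. f I) = (\<Sum>I\<in>Pow J. f (insert \<alpha> I))"
    by (rule sum.reindex_cong[of "insert \<alpha>"]) (use assms in \<open>auto simp: inj_on_def\<close>)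
  finally show ?thesis .
qed

lemma dI_gmult:
  assumes p: "par p a"
  shows "dI \<alpha> (gmult a b) = gmult (dI \<alpha> a) b + gscale ((-1) ^ p) (gmult a (dI \<alpha> b))"
proof
  fix J
  show "dI \<alpha> (gmult a b) J = (gmult (dI \<alpha> a) b + gscale ((-1) ^ p) (gmult a (dI \<alpha> b))) J"
  proof (cases "finite J")
    case False
    thus ?thesis by (simp add: dI_def gmult_infinite)
  next
    case fin: True
    show ?thesis
    proof (cases "\<alpha> \<in> J")
      case False
      have LHS: "dI \<alpha> (gmult a b) J = (\<Sum>I\<in>Pow J. sgl \<alpha> J * (gsign I (insert \<alpha> (J - I)) * a I * b (insert \<alpha> (J - I))))
          + (\<Sum>I\<in>Pow J. sgl \<alpha> J * (gsign (insert \<alpha> I) (J - I) * a (insert \<alpha> I) * b (J - I)))"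
      proof -
        have "dI \<alpha> (gmult a b) J = sgl \<alpha> J * (\<Sum>I\<in>Pow (insert \<alpha> J). gsign I (insert \<alpha> J - I) * a I * b (insert \<alpha> J - I))"
          using False by (simp add: dI_def gmult_def2)
        also have "\<dots> = sgl \<alpha> J * ((\<Sum>I\<in>Pow J. gsign I (insert \<alpha> J - I) * a I * b (insert \<alpha> J - I))
            + (\<Sum>I\<in>Pow J. gsign (insert \<alpha> I) (insert \<alpha> J - insert \<alpha> I) * a (insert \<alpha> I) * b (insert \<alpha> J - insert \<alpha> I)))"
          by (subst sum_Pow_insert[OF fin False]) rule
        also have "\<dots> = (\<Sum>I\<in>Pow J. sgl \<alpha> J * (gsign I (insert \<alpha> (J - I)) * a I * b (insert \<alpha> (J - I))))
          + (\<Sum>I\<in>Pow J. sgl \<alpha> J * (gsign (insert \<alpha> I) (J - I) * a (insert \<alpha> I) * b (J - I)))"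
        proof -
          have e1: "I \<in> Pow J \<Longrightarrow> insert \<alpha> J - I = insert \<alpha> (J - I)" for I using False by auto
          have e2: "I \<in> Pow J \<Longrightarrow> insert \<alpha> J - insert \<alpha> I = J - I" for I using False by auto
          have s1: "(\<Sum>I\<in>Pow J. sgl \<alpha> J * (gsign I (insert \<alpha> J - I) * a I * b (insert \<alpha> J - I)))
              = (\<Sum>I\<in>Pow J. sgl \<alpha> J * (gsign I (insert \<alpha> (J - I)) * a I * b (insert \<alpha> (J - I))))"
            by (rule sum.cong[OF refl]) (simp only: e1)
          have s2: "(\<Sum>I\<in>Pow J. sgl \<alpha> J * (gsign (insert \<alpha> I) (insert \<alpha> J - insert \<alpha> I) * a (insert \<alpha> I) * b (insert \<alpha> J - insert \<alpha> I)))
              = (\<Sum>I\<in>Pow J. sgl \<alpha> J * (gsign (insert \<alpha> I) (J - I) * a (insert \<alpha> I) * b (J - I)))"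
            by (rule sum.cong[OF refl]) (simp only: e2)
          show ?thesis unfolding distrib_left sum_distrib_left s1 s2 ..
        qed
        finally show ?thesis .
      qed
      have R1: "gmult (dI \<alpha> a) b J = (\<Sum>I\<in>Pow J. gsign I (J - I) * (sgl \<alpha> I * a (insert \<alpha> I)) * b (J - I))"
        unfolding gmult_def2 dI_def using False by (intro sum.cong) auto
      have R2: "gmult a (dI \<alpha> b) J = (\<Sum>I\<in>Pow J. gsign I (J - I) * a I * (sgl \<alpha> (J - I) * b (insert \<alpha> (J - I))))"
        unfolding gmult_def2 dI_def using False by (intro sum.cong) auto
      have B: "sgl \<alpha> J * (gsign (insert \<alpha> I) (J - I) * a (insert \<alpha> I) * b (J - I))
          = gsign I (J - I) * (sgl \<alpha> I * a (insert \<alpha> I)) * b (J - I)" if I: "I \<in> Pow J" for I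
      proof -
        have f: "finite I" "finite (J - I)" "\<alpha> \<notin> I" "\<alpha> \<notin> J - I" using I fin False by (auto dest: finite_subset)
        have "sgl \<alpha> J = sgl \<alpha> I * sgl \<alpha> (J - I)"
          using sgl_union[of I "J - I" \<alpha>] f I by (simp add: Un_absorb1)
        moreover have "gsign (insert \<alpha> I) (J - I) = sgl \<alpha> (J - I) * gsign I (J - I)"
          by (rule gsign_insert_left) (use f in auto)
        ultimately show ?thesis using sgl_sq[of \<alpha> "J - I"] by (simp add: algebra_simps)
      qed
      have A: "sgl \<alpha> J * (gsign I (insert \<alpha> (J - I)) * a I * b (insert \<alpha> (J - I)))
          = (-1) ^ p * (gsign I (J - I) * a I * (sgl \<alpha> (J - I) * b (insert \<alpha> (J - I))))" if I: "I \<in> Pow J" for I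
      proof (cases "a I = 0")
        case True thus ?thesis by simp
      next
        case nz: False
        have f: "finite I" "finite (J - I)" "\<alpha> \<notin> I" "\<alpha> \<notin> J - I" using I fin False by (auto dest: finite_subset)
        have "sgl \<alpha> J = sgl \<alpha> I * sgl \<alpha> (J - I)"
          using sgl_union[of I "J - I" \<alpha>] f I by (simp add: Un_absorb1)
        moreover have "gsign I (insert \<alpha> (J - I)) = sgr \<alpha> I * gsign I (J - I)"
          by (rule gsign_insert_right) (use f in auto)
        moreover have "sgl \<alpha> I * sgr \<alpha> I = (-1) ^ p"
          using sgl_sgr[OF f(1) f(3)] par_sign[OF p nz] by simp
        ultimately show ?thesis by (simp add: algebra_simps)
      qed
      have SA: "(\<Sum>I\<in>Pow J. sgl \<alpha> J * (gsign I (insert \<alpha> (J - I)) * a I * b (insert \<alpha> (J - I))))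
          = (\<Sum>I\<in>Pow J. (-1) ^ p * (gsign I (J - I) * a I * (sgl \<alpha> (J - I) * b (insert \<alpha> (J - I)))))"
        by (rule sum.cong[OF refl]) (rule A)
      have SB: "(\<Sum>I\<in>Pow J. sgl \<alpha> J * (gsign (insert \<alpha> I) (J - I) * a (insert \<alpha> I) * b (J - I)))
          = (\<Sum>I\<in>Pow J. gsign I (J - I) * (sgl \<alpha> I * a (insert \<alpha> I)) * b (J - I))"
        by (rule sum.cong[OF refl]) (rule B)
      show ?thesis unfolding LHS plus_fun_apply gscale_apply R1 R2 sum_distrib_left SA SB
        by (rule add.commute)
    next
      case True
      define J' where "J' = J - {\<alpha>}"
      have J: "J = insert \<alpha> J'" "\<alpha> \<notin> J'" "finite J'" using True fin by (auto simp: J'_def)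
      have R1: "gmult (dI \<alpha> a) b J = (\<Sum>I\<in>Pow J'. gsign I (insert \<alpha> (J' - I)) * (sgl \<alpha> I * a (insert \<alpha> I)) * b (insert \<alpha> (J' - I)))"
      proof -
        have "gmult (dI \<alpha> a) b J = (\<Sum>I\<in>Pow J'. gsign I (J - I) * dI \<alpha> a I * b (J - I))
           + (\<Sum>I\<in>Pow J'. gsign (insert \<alpha> I) (J - insert \<alpha> I) * dI \<alpha> a (insert \<alpha> I) * b (J - insert \<alpha> I))"
          unfolding gmult_def2 J(1) by (rule sum_Pow_insert[OF J(3) J(2)])
        also have "\<dots> = (\<Sum>I\<in>Pow J'. gsign I (insert \<alpha> (J' - I)) * (sgl \<alpha> I * a (insert \<alpha> I)) * b (insert \<alpha> (J' - I)))"
        proof -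
          have e: "I \<in> Pow J' \<Longrightarrow> J - I = insert \<alpha> (J' - I)" for I using J by auto
          have z: "(\<Sum>I\<in>Pow J'. gsign (insert \<alpha> I) (J - insert \<alpha> I) * dI \<alpha> a (insert \<alpha> I) * b (J - insert \<alpha> I)) = 0"
            by (simp add: dI_def)
          have "(\<Sum>I\<in>Pow J'. gsign I (J - I) * dI \<alpha> a I * b (J - I)) = (\<Sum>I\<in>Pow J'. gsign I (insert \<alpha> (J' - I)) * (sgl \<alpha> I * a (insert \<alpha> I)) * b (insert \<alpha> (J' - I)))"
          proof (rule sum.cong[OF refl])
            fix I assume I: "I \<in> Pow J'"
            hence "\<alpha> \<notin> I" using J by auto
            thus "gsign I (J - I) * dI \<alpha> a I * b (J - I) = gsign I (insert \<alpha> (J' - I)) * (sgl \<alpha> I * a (insert \<alpha> I)) * b (insert \<alpha> (J' - I))"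
              by (simp add: dI_def e[OF I])
          qed
          thus ?thesis using z by simp
        qed
        finally show ?thesis .
      qed
      have R2: "gmult a (dI \<alpha> b) J = (\<Sum>I\<in>Pow J'. gsign (insert \<alpha> I) (J' - I) * a (insert \<alpha> I) * (sgl \<alpha> (J' - I) * b (insert \<alpha> (J' - I))))"
      proof -
        have "gmult a (dI \<alpha> b) J = (\<Sum>I\<in>Pow J'. gsign I (J - I) * a I * dI \<alpha> b (J - I))
           + (\<Sum>I\<in>Pow J'. gsign (insert \<alpha> I) (J - insert \<alpha> I) * a (insert \<alpha> I) * dI \<alpha> b (J - insert \<alpha> I))"
          unfolding gmult_def2 J(1) by (rule sum_Pow_insert[OF J(3) J(2)])
        also have "\<dots> = (\<Sum>I\<in>Pow J'. gsign (insert \<alpha> I) (J' - I) * a (insert \<alpha> I) * (sgl \<alpha> (J' - I) * b (insert \<alpha> (J' - I))))"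
        proof -
          have e: "I \<in> Pow J' \<Longrightarrow> J - I = insert \<alpha> (J' - I)" for I using J by auto
          have e2: "I \<in> Pow J' \<Longrightarrow> J - insert \<alpha> I = J' - I" for I using J by auto
          have z: "(\<Sum>I\<in>Pow J'. gsign I (J - I) * a I * dI \<alpha> b (J - I)) = 0"
            by (rule sum.neutral) (auto simp: dI_def e)
          have "(\<Sum>I\<in>Pow J'. gsign (insert \<alpha> I) (J - insert \<alpha> I) * a (insert \<alpha> I) * dI \<alpha> b (J - insert \<alpha> I))
             = (\<Sum>I\<in>Pow J'. gsign (insert \<alpha> I) (J' - I) * a (insert \<alpha> I) * (sgl \<alpha> (J' - I) * b (insert \<alpha> (J' - I))))"
          proof (rule sum.cong[OF refl])
            fix I assume I: "I \<in> Pow J'"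
            have "\<alpha> \<notin> J' - I" using J by auto
            thus "gsign (insert \<alpha> I) (J - insert \<alpha> I) * a (insert \<alpha> I) * dI \<alpha> b (J - insert \<alpha> I)
              = gsign (insert \<alpha> I) (J' - I) * a (insert \<alpha> I) * (sgl \<alpha> (J' - I) * b (insert \<alpha> (J' - I)))"
              using J(2) by (simp add: dI_def e2[OF I])
          qed
          thus ?thesis using z by simp
        qed
        finally show ?thesis .
      qed
      have C: "gsign I (insert \<alpha> (J' - I)) * (sgl \<alpha> I * a (insert \<alpha> I)) * b (insert \<alpha> (J' - I))
          + (-1) ^ p * (gsign (insert \<alpha> I) (J' - I) * a (insert \<alpha> I) * (sgl \<alpha> (J' - I) * b (insert \<alpha> (J' - I)))) = 0"
        if I: "I \<in> Pow J'" for I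
      proof (cases "a (insert \<alpha> I) = 0")
        case True thus ?thesis by simp
      next
        case nz: False
        have f: "finite I" "finite (J' - I)" "\<alpha> \<notin> I" "\<alpha> \<notin> J' - I" using I J by (auto dest: finite_subset)
        have "gsign I (insert \<alpha> (J' - I)) = sgr \<alpha> I * gsign I (J' - I)"
          by (rule gsign_insert_right) (use f in auto)
        moreover have "gsign (insert \<alpha> I) (J' - I) = sgl \<alpha> (J' - I) * gsign I (J' - I)"
          by (rule gsign_insert_left) (use f in auto)
        moreover have "sgl \<alpha> I * sgr \<alpha> I = (-1) ^ card I" by (rule sgl_sgr[OF f(1) f(3)])
        moreover have "(-1::complex) ^ card (insert \<alpha> I) = (-1) ^ p" by (rule par_sign[OF p nz])
        hence "(-1::complex) ^ p = - ((-1) ^ card I)" using f by simp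
        ultimately show ?thesis using sgl_sq[of \<alpha> "J' - I"] by (simp add: algebra_simps)
      qed
      have "dI \<alpha> (gmult a b) J = 0" using True by (simp add: dI_def)
      moreover have "gmult (dI \<alpha> a) b J + (-1) ^ p * gmult a (dI \<alpha> b) J = 0"
        unfolding R1 R2 sum_distrib_left sum.distrib[symmetric] by (rule sum.neutral) (use C in blast)
      ultimately show ?thesis by simp
    qed
  qed
qed

lemma dIr_dI:
  assumes p: "par p a" and s: "supp m a"
  shows "dIr \<alpha> a = gscale ((-1) ^ (p + 1)) (dI \<alpha> a)"
proof
  fix J
  show "dIr \<alpha> a J = gscale ((-1) ^ (p + 1)) (dI \<alpha> a) J"
  proof (cases "\<alpha> \<in> J \<or> a (insert \<alpha> J) = 0")
    case True thus ?thesis by (auto simp: dIr_def dI_def)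
  next
    case False
    hence nz: "a (insert \<alpha> J) \<noteq> 0" and a: "\<alpha> \<notin> J" by auto
    have f: "finite J" using supp_finite[OF s nz] by simp
    have "(-1::complex) ^ card (insert \<alpha> J) = (-1) ^ p" by (rule par_sign[OF p nz])
    moreover have "(-1::complex) ^ card (insert \<alpha> J) = - ((-1) ^ card J)" using f a by simp
    ultimately have c: "(-1::complex) ^ card J = - ((-1) ^ p)" by (metis minus_minus)
    have "sgr \<alpha> J = sgl \<alpha> J * (-1) ^ card J"
      using sgl_sgr[OF f a] sgl_sq[of \<alpha> J] by (metis mult.assoc mult_1)
    thus ?thesis using a c by (simp add: dIr_def dI_def)
  qed
qed

lemma homog_par: "homog p U F \<longleftrightarrow> (\<forall>x\<in>U. par p (F x))"
  by (simp add: homog_def par_def)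

lemma sfun_supp: "sfun m U F \<Longrightarrow> x \<in> U \<Longrightarrow> supp m (F x)"
  by (simp add: sfun_def supp_def)

lemma dI_add: "dI \<alpha> (a + b) = dI \<alpha> a + dI \<alpha> b"
  by (rule ext) (simp add: dI_def algebra_simps)
lemma dI_scale: "dI \<alpha> (gscale c a) = gscale c (dI \<alpha> a)"
  by (rule ext) (simp add: dI_def algebra_simps)
lemma dI_zero: "dI \<alpha> 0 = 0"
  by (rule ext) (simp add: dI_def)
lemma dI_gone: "dI \<alpha> gone = 0"
  by (rule ext) (simp add: dI_def gone_def)

lemma dl_Inl: "dleft (Inl a) F x J = pd a (\<lambda>y. F y J) x"
  by (simp add: dleft_def)
lemma dr_Inl: "dright (Inl a) F x J = pd a (\<lambda>y. F y J) x"
  by (simp add: dright_def)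

context
  fixes U :: "(real^'n::finite) set"
  assumes U: "open U"
begin

lemma sm_diff_at: "sm U F \<Longrightarrow> x \<in> U \<Longrightarrow> (\<lambda>y. F y J) differentiable (at x)"
  using smooth_diff_at[OF U] by (simp add: sm_def)

lemma dleft_add:
  assumes "sm U F" "sm U G" "x \<in> U"
  shows "dleft A (\<lambda>y. F y + G y) x = dleft A F x + dleft A G x"
proof (cases A)
  case (Inl a)
  show ?thesis unfolding Inl
    by (rule ext) (simp add: dl_Inl pd_add sm_diff_at[OF assms(1) assms(3)] sm_diff_at[OF assms(2) assms(3)])
next
  case (Inr \<alpha>)
  show ?thesis unfolding Inr dleft_Inr_dI
    by (metis dI_add plus_fun_def)
qed

lemma dleft_scale:
  assumes "sm U F" "x \<in> U"
  shows "dleft A (\<lambda>y. gscale c (F y)) x = gscale c (dleft A F x)"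
proof (cases A)
  case (Inl a)
  show ?thesis unfolding Inl
    by (rule ext) (simp add: dl_Inl pd_cmult sm_diff_at assms)
next
  case (Inr \<alpha>)
  show ?thesis unfolding Inr dleft_Inr_dI by (rule dI_scale)
qed

lemma dleft_zero: "dleft A (\<lambda>y. 0) x = 0"
proof (cases A)
  case (Inl a)
  show ?thesis unfolding Inl by (rule ext) (simp add: dl_Inl pd_const)
next
  case (Inr \<alpha>)
  show ?thesis unfolding Inr dleft_Inr_dI by (simp add: dI_zero)
qed

lemma dleft_sum:
  assumes "finite S" "\<And>i. i \<in> S \<Longrightarrow> sm U (F i)" "x \<in> U"
  shows "dleft A (\<lambda>y. \<Sum>i\<in>S. F i y) x = (\<Sum>i\<in>S. dleft A (F i) x)"
  using assms(1,2)
proof (induction S rule: finite_induct)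
  case empty show ?case using dleft_zero[of A x] by (simp add: zero_fun_def)
next
  case (insert j S)
  have "dleft A (\<lambda>y. \<Sum>i\<in>insert j S. F i y) x = dleft A (\<lambda>y. F j y + (\<Sum>i\<in>S. F i y)) x"
    using insert by simp
  also have "\<dots> = dleft A (F j) x + dleft A (\<lambda>y. \<Sum>i\<in>S. F i y) x"
    by (rule dleft_add) (use insert assms(3) in \<open>auto intro: sm_sum[OF U]\<close>)
  finally have c: "dleft A (\<lambda>y. \<Sum>i\<in>insert j S. F i y) x = dleft A (F j) x + dleft A (\<lambda>y. \<Sum>i\<in>S. F i y) x" .
  have ih: "dleft A (\<lambda>y. \<Sum>i\<in>S. F i y) x = (\<Sum>i\<in>S. dleft A (F i) x)" using insert by blast
  show ?case using c by (simp only: ih sum.insert[OF insert(1,2)])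
qed

lemma dleft_diff:
  assumes "sm U F" "sm U G" "x \<in> U"
  shows "dleft A (\<lambda>y. F y - G y) x = dleft A F x - dleft A G x"
proof -
  have e: "(\<lambda>y. F y - G y) = (\<lambda>y. F y + gscale (-1) (G y))" by (rule ext, rule ext) simp
  have "dleft A (\<lambda>y. F y - G y) x = dleft A F x + gscale (-1) (dleft A G x)"
    unfolding e by (simp add: dleft_add dleft_scale sm_scale[OF U] assms)
  thus ?thesis by (simp add: fun_eq_iff)
qed

lemma dleft_gmult:
  assumes F: "sm U F" and G: "sm U G" and x: "x \<in> U" and p: "par p (F x)"
  shows "dleft A (\<lambda>y. gmult (F y) (G y)) x =
     gmult (dleft A F x) (G x) + gscale ((-1) ^ (eps A * p)) (gmult (F x) (dleft A G x))"
proof (cases A)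
  case (Inr \<alpha>)
  show ?thesis unfolding Inr dleft_Inr_dI by (simp add: dI_gmult[OF p])
next
  case (Inl a)
  show ?thesis unfolding Inl
  proof (rule ext)
    fix K
    show "dleft (Inl a) (\<lambda>y. gmult (F y) (G y)) x K =
      (gmult (dleft (Inl a) F x) (G x) + gscale ((-1) ^ (eps (Inl a) * p)) (gmult (F x) (dleft (Inl a) G x))) K"
    proof (cases "finite K")
      case False thus ?thesis by (simp add: dl_Inl gmult_infinite pd_const)
    next
      case True
      have "dleft (Inl a) (\<lambda>y. gmult (F y) (G y)) x K =
        pd a (\<lambda>y. \<Sum>I\<in>Pow K. gsign I (K - I) * (F y I * G y (K - I))) x"
        by (simp add: dl_Inl gmult_def2 mult.assoc)
      also have "\<dots> = (\<Sum>I\<in>Pow K. gsign I (K - I) * (pd a (\<lambda>y. F y I) x * G x (K - I) + F x I * pd a (\<lambda>y. G y (K - I)) x))"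
        using True
        by (simp add: pd_sum pd_cmult pd_mult sm_diff_at[OF F x] sm_diff_at[OF G x]
              differentiable_mult differentiable_const)
      also have "\<dots> = (gmult (dleft (Inl a) F x) (G x) + gscale ((-1) ^ (eps (Inl a) * p)) (gmult (F x) (dleft (Inl a) G x))) K"
        by (simp add: gmult_def2 dl_Inl algebra_simps sum.distrib)
      finally show ?thesis .
    qed
  qed
qed

lemma dleft_scale_fun_Inl:
  assumes c: "smooth_on U c" and F: "sm U F" and x: "x \<in> U"
  shows "dleft (Inl a) (\<lambda>y. gscale (c y) (F y)) x = gscale (pd a c x) (F x) + gscale (c x) (dleft (Inl a) F x)"
  by (rule ext) (simp add: dl_Inl pd_mult smooth_diff_at[OF U c x] sm_diff_at[OF F x])

lemma dleft_scale_fun_Inr: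
  "dleft (Inr \<alpha>) (\<lambda>y. gscale (c y) (F y)) x = gscale (c x) (dleft (Inr \<alpha>) F x)"
  by (simp add: dleft_Inr_dI dI_scale)

lemma dleft_const_Inl: "dleft (Inl a) (\<lambda>y. k) x = 0"
  by (rule ext) (simp add: dl_Inl pd_const)

lemma par_dleft:
  assumes h: "homog p U F" and s: "supp m (F x)" and x: "x \<in> U"
  shows "par (p + eps A) (dleft A F x)"
proof (cases A)
  case (Inl a)
  show ?thesis unfolding Inl par_def
  proof (intro allI impI)
    fix J assume nz: "dleft (Inl a) F x J \<noteq> 0"
    show "card J mod 2 = (p + eps (Inl a)) mod 2"
    proof (rule ccontr)
      assume "card J mod 2 \<noteq> (p + eps (Inl a)) mod 2"
      hence "\<And>y. y \<in> U \<Longrightarrow> F y J = 0" using h by (auto simp: homog_def)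
      hence "pd a (\<lambda>y. F y J) x = pd a (\<lambda>y. 0) x" by (intro pd_local[OF U x]) auto
      thus False using nz by (simp add: dl_Inl pd_const)
    qed
  qed
next
  case (Inr \<alpha>)
  show ?thesis unfolding Inr par_def dleft_Inr_dI
  proof (intro allI impI)
    fix J assume nz: "dI \<alpha> (F x) J \<noteq> 0"
    hence a: "\<alpha> \<notin> J" and nz2: "F x (insert \<alpha> J) \<noteq> 0" by (auto simp: dI_def split: if_splits)
    have f: "finite J" using supp_finite[OF s nz2] by simp
    have "card (insert \<alpha> J) mod 2 = p mod 2" using h x nz2 by (auto simp: homog_def)
    thus "card J mod 2 = (p + eps (Inr \<alpha>)) mod 2" using f a by simp presburger
  qed
qed

lemma supp_dleft:
  assumes s: "\<And>y. y \<in> U \<Longrightarrow> supp m (F y)" and x: "x \<in> U"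
  shows "supp m (dleft A F x)"
proof (cases A)
  case (Inl a)
  show ?thesis unfolding Inl supp_def
  proof (intro allI impI)
    fix J assume nz: "dleft (Inl a) F x J \<noteq> 0"
    show "J \<subseteq> {..<m}"
    proof (rule ccontr)
      assume "\<not> J \<subseteq> {..<m}"
      hence "\<And>y. y \<in> U \<Longrightarrow> F y J = 0" using s by (auto simp: supp_def)
      hence "pd a (\<lambda>y. F y J) x = pd a (\<lambda>y. 0) x" by (intro pd_local[OF U x]) auto
      thus False using nz by (simp add: dl_Inl pd_const)
    qed
  qed
next
  case (Inr \<alpha>)
  show ?thesis unfolding Inr supp_def dleft_Inr_dI
    using s[OF x] by (auto simp: dI_def supp_def split: if_splits)
qed

end

lemmas gr_simps = gmult_add_left gmult_add_right gmult_scale_left gmult_scale_right gmult_assoc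
  gmult_diff_left gmult_diff_right gscale_add gscale_diff gscale_gscale

lemma eps_cases: "eps A = 0 \<or> eps A = 1"
  by (cases A) auto

lemma finite_idx: "finite (idx m :: ('n::finite + nat) set)"
  unfolding idx_def by simp

locale BV =
  fixes m :: nat and U :: "(real^'n::finite) set" and \<rho> :: "'n sfun"
    and E :: "'n + nat \<Rightarrow> 'n + nat \<Rightarrow> 'n sfun" and \<Psi> :: "'n sfun"
  assumes U: "open U"
    and Esf: "\<And>A B. A \<in> idx m \<Longrightarrow> B \<in> idx m \<Longrightarrow> sfun m U (E A B)"
    and Ehom: "\<And>A B. A \<in> idx m \<Longrightarrow> B \<in> idx m \<Longrightarrow> homog (eps A + eps B + 1) U (E A B)"
    and Eanti: "\<And>A B x. A \<in> idx m \<Longrightarrow> B \<in> idx m \<Longrightarrow> x \<in> U \<Longrightarrow>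
        E B A x = gscale (- ((-1) ^ ((eps A + 1) * (eps B + 1)))) (E A B x)"
    and rho_sf: "sfun m U \<rho>" and rho_hom: "homog 0 U \<rho>" and rho_nz: "\<And>x. x \<in> U \<Longrightarrow> \<rho> x {} \<noteq> 0"
    and Psi_sf: "sfun m U \<Psi>" and Psi_hom: "homog 1 U \<Psi>"
begin

lemma Esm: "A \<in> idx m \<Longrightarrow> B \<in> idx m \<Longrightarrow> sm U (E A B)"
  using Esf sfun_sm by blast
lemma Esupp: "A \<in> idx m \<Longrightarrow> B \<in> idx m \<Longrightarrow> y \<in> U \<Longrightarrow> supp m (E A B y)"
  using Esf sfun_supp by blast
lemma Epar: "A \<in> idx m \<Longrightarrow> B \<in> idx m \<Longrightarrow> y \<in> U \<Longrightarrow> par (eps A + eps B + 1) (E A B y)"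
  using Ehom homog_par by blast
lemma rho_sm: "sm U \<rho>" using rho_sf sfun_sm by blast
lemma rho_supp: "y \<in> U \<Longrightarrow> supp m (\<rho> y)" using rho_sf sfun_supp by blast
lemma rho_par: "y \<in> U \<Longrightarrow> par 0 (\<rho> y)" using rho_hom homog_par by blast
lemma Psi_sm: "sm U \<Psi>" using Psi_sf sfun_sm by blast
lemma Psi_supp: "y \<in> U \<Longrightarrow> supp m (\<Psi> y)" using Psi_sf sfun_supp by blast
lemma Psi_par: "y \<in> U \<Longrightarrow> par 1 (\<Psi> y)" using Psi_hom homog_par by blast

definition rinv :: "real^'n \<Rightarrow> gr" where "rinv x = ginv m (\<rho> x)"

lemma rinv_rho: "x \<in> U \<Longrightarrow> gmult (rinv x) (\<rho> x) = gone"
  unfolding rinv_def by (rule ginv_left[OF rho_supp rho_nz])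
lemma rinv_par: "x \<in> U \<Longrightarrow> par 0 (rinv x)"
  unfolding rinv_def by (rule par_ginv[OF rho_par])
lemma rinv_supp: "x \<in> U \<Longrightarrow> supp m (rinv x)"
  unfolding rinv_def by (rule supp_ginv[OF rho_supp])

lemma rinv_rho_mult: "x \<in> U \<Longrightarrow> supp m z \<Longrightarrow> gmult (rinv x) (gmult (\<rho> x) z) = z"
  by (simp add: gmult_assoc[symmetric] rinv_rho gmult_gone_left)

lemma dright_Psi: "x \<in> U \<Longrightarrow> dright A \<Psi> x = dleft A \<Psi> x"
proof (cases A)
  case (Inl a) thus ?thesis by (auto simp: dl_Inl dr_Inl)
next
  case (Inr \<alpha>)
  assume x: "x \<in> U"
  show ?thesis unfolding Inr dleft_Inr_dI dright_Inr_dIr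
    using dIr_dI[OF Psi_par[OF x] Psi_supp[OF x], of \<alpha>] by simp
qed

lemma sm_dl: "sm U F \<Longrightarrow> sm U (dleft A F)" by (rule sm_dleft[OF U])

definition P :: "'n + nat \<Rightarrow> 'n + nat \<Rightarrow> 'n sfun" where
  "P A B = (\<lambda>y. gmult (\<rho> y) (gmult (E A B y) (dleft B \<Psi> y)))"
definition Q :: "'n sfun \<Rightarrow> 'n + nat \<Rightarrow> 'n + nat \<Rightarrow> 'n sfun" where
  "Q G A B = (\<lambda>y. gmult (\<rho> y) (gmult (E A B y) (dleft B G y)))"

lemma P_sm: "A \<in> idx m \<Longrightarrow> B \<in> idx m \<Longrightarrow> sm U (P A B)"
  unfolding P_def by (intro sm_gmult[OF U] rho_sm Esm sm_dl Psi_sm)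
lemma Q_sm: "sm U G \<Longrightarrow> A \<in> idx m \<Longrightarrow> B \<in> idx m \<Longrightarrow> sm U (Q G A B)"
  unfolding Q_def by (intro sm_gmult[OF U] rho_sm Esm sm_dl)

lemma P_par: "A \<in> idx m \<Longrightarrow> B \<in> idx m \<Longrightarrow> y \<in> U \<Longrightarrow> par (eps A) (P A B y)"
proof -
  assume A: "A \<in> idx m" and B: "B \<in> idx m" and y: "y \<in> U"
  have "par (0 + ((eps A + eps B + 1) + (1 + eps B))) (P A B y)"
    unfolding P_def
    by (intro par_gmult rho_par[OF y] Epar[OF A B y] par_dleft[OF U Psi_hom Psi_supp[OF y] y])
  moreover have "(0 + ((eps A + eps B + 1) + (1 + eps B))) mod 2 = eps A mod 2" by presburger
  ultimately show ?thesis using par_mod by blast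
qed

lemma L1:
  assumes G: "sm U G" and A: "A \<in> idx m" and B: "B \<in> idx m" and y: "y \<in> U"
  shows "gmult (\<rho> y) (gmult (E A B y) (dleft B (smul \<Psi> G) y)) =
    gmult (P A B y) (G y) + gscale ((-1) ^ (eps A + 1)) (gmult (\<Psi> y) (Q G A B y))"
proof -
  have d: "dleft B (smul \<Psi> G) y = gmult (dleft B \<Psi> y) (G y) + gscale ((-1) ^ (eps B * 1)) (gmult (\<Psi> y) (dleft B G y))"
    unfolding smul_def by (rule dleft_gmult[OF U Psi_sm G y Psi_par[OF y]])
  have c1: "gmult (E A B y) (\<Psi> y) = gscale ((-1) ^ ((eps A + eps B + 1) * 1)) (gmult (\<Psi> y) (E A B y))"
    by (rule gmult_comm_par[OF Epar[OF A B y] Psi_par[OF y]])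
  have c2: "gmult (\<rho> y) (\<Psi> y) = gmult (\<Psi> y) (\<rho> y)"
    by (rule gmult_comm_ev[OF rho_par[OF y]])
  have "gmult (\<rho> y) (gmult (E A B y) (gmult (\<Psi> y) (dleft B G y)))
      = gscale ((-1) ^ (eps A + eps B + 1)) (gmult (\<Psi> y) (Q G A B y))"
  proof -
    have "gmult (E A B y) (gmult (\<Psi> y) (dleft B G y)) = gscale ((-1) ^ (eps A + eps B + 1)) (gmult (\<Psi> y) (gmult (E A B y) (dleft B G y)))"
      using c1 by (simp add: gmult_assoc[symmetric] gmult_scale_left)
    hence "gmult (\<rho> y) (gmult (E A B y) (gmult (\<Psi> y) (dleft B G y)))
      = gscale ((-1) ^ (eps A + eps B + 1)) (gmult (gmult (\<rho> y) (\<Psi> y)) (gmult (E A B y) (dleft B G y)))"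
      by (simp add: gmult_scale_right gmult_assoc)
    also have "\<dots> = gscale ((-1) ^ (eps A + eps B + 1)) (gmult (\<Psi> y) (Q G A B y))"
      unfolding c2 Q_def by (simp add: gmult_assoc)
    finally show ?thesis .
  qed
  moreover have "(-1::complex) ^ (eps B * 1) * (-1) ^ (eps A + eps B + 1) = (-1) ^ (eps A + 1)"
    using eps_cases[of A] eps_cases[of B] by auto
  ultimately show ?thesis
    unfolding d P_def by (simp add: gmult_add_right gmult_scale_right gmult_assoc)
qed

lemma L2:
  assumes G: "sm U G" and A: "A \<in> idx m" and B: "B \<in> idx m" and x: "x \<in> U"
  shows "dleft A (\<lambda>y. gmult (\<rho> y) (gmult (E A B y) (dleft B (smul \<Psi> G) y))) x =
    gmult (dleft A (P A B) x) (G x) + gscale ((-1) ^ eps A) (gmult (P A B x) (dleft A G x))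
    + gscale ((-1) ^ (eps A + 1)) (gmult (dleft A \<Psi> x) (Q G A B x) + gscale ((-1) ^ eps A) (gmult (\<Psi> x) (dleft A (Q G A B) x)))"
proof -
  have e1: "(-1::complex) ^ (eps A * eps A) = (-1) ^ eps A" using eps_cases[of A] by auto
  have "dleft A (\<lambda>y. gmult (\<rho> y) (gmult (E A B y) (dleft B (smul \<Psi> G) y))) x =
    dleft A (\<lambda>y. gmult (P A B y) (G y) + gscale ((-1) ^ (eps A + 1)) (gmult (\<Psi> y) (Q G A B y))) x"
    by (rule dleft_local[OF U x]) (rule L1[OF G A B])
  also have "\<dots> = dleft A (\<lambda>y. gmult (P A B y) (G y)) x + gscale ((-1) ^ (eps A + 1)) (dleft A (\<lambda>y. gmult (\<Psi> y) (Q G A B y)) x)"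
    by (simp add: dleft_add[OF U] dleft_scale[OF U] sm_scale[OF U] sm_gmult[OF U] P_sm[OF A B] Q_sm[OF G A B] Psi_sm G x)
  also have "dleft A (\<lambda>y. gmult (P A B y) (G y)) x = gmult (dleft A (P A B) x) (G x) + gscale ((-1) ^ (eps A * eps A)) (gmult (P A B x) (dleft A G x))"
    by (rule dleft_gmult[OF U P_sm[OF A B] G x P_par[OF A B x]])
  also have "dleft A (\<lambda>y. gmult (\<Psi> y) (Q G A B y)) x = gmult (dleft A \<Psi> x) (Q G A B x) + gscale ((-1) ^ (eps A * 1)) (gmult (\<Psi> x) (dleft A (Q G A B) x))"
    by (rule dleft_gmult[OF U Psi_sm Q_sm[OF G A B] x Psi_par[OF x]])
  finally show ?thesis using e1 by (simp only: e1 mult_1_right)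
qed

lemma L3:
  assumes G: "sm U G" and A: "A \<in> idx m" and B: "B \<in> idx m" and x: "x \<in> U"
  shows "gscale ((-1) ^ eps A / 2) (dleft A (\<lambda>y. gmult (\<rho> y) (gmult (E A B y) (dleft B (smul \<Psi> G) y))) x) =
    gmult (gscale ((-1) ^ eps A / 2) (dleft A (P A B) x)) (G x)
    + gscale (1/2) (gmult (P A B x) (dleft A G x))
    - gscale (1/2) (gmult (dleft A \<Psi> x) (Q G A B x))
    - gmult (\<Psi> x) (gscale ((-1) ^ eps A / 2) (dleft A (Q G A B) x))"
  unfolding L2[OF G A B x]
  using eps_cases[of A] by (auto simp: gr_simps fun_eq_iff algebra_simps)

lemma Esign:
  assumes A: "A \<in> idx m" and B: "B \<in> idx m" and x: "x \<in> U"
  shows "gmult (E A B x) (dleft B \<Psi> x) = gscale (-1) (gmult (dleft B \<Psi> x) (E B A x))"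
proof -
  have c: "gmult (E A B x) (dleft B \<Psi> x) = gscale ((-1) ^ ((eps A + eps B + 1) * (1 + eps B))) (gmult (dleft B \<Psi> x) (E A B x))"
    by (rule gmult_comm_par[OF Epar[OF A B x] par_dleft[OF U Psi_hom Psi_supp[OF x] x]])
  have e: "E A B x = gscale (- ((-1) ^ ((eps B + 1) * (eps A + 1)))) (E B A x)"
    by (rule Eanti[OF B A x])
  have s: "(-1::complex) ^ ((eps A + eps B + 1) * (1 + eps B)) * - ((-1) ^ ((eps B + 1) * (eps A + 1))) = -1"
    using eps_cases[of A] eps_cases[of B] by auto
  show ?thesis unfolding c by (subst e) (simp only: gmult_scale_right gscale_gscale s)
qed

lemma supp_EdG:
  assumes A: "A \<in> idx m" and B: "B \<in> idx m" and x: "x \<in> U" and Gs: "\<And>y. y \<in> U \<Longrightarrow> supp m (G y)"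
  shows "supp m (gmult (E A B x) (dleft B G x))"
  by (intro supp_gmult Esupp[OF A B x] supp_dleft[OF U Gs x])

theorem commLap_eq:
  assumes G: "sm U G" and Gs: "\<And>y. y \<in> U \<Longrightarrow> supp m (G y)" and x: "x \<in> U"
  shows "commLap m \<rho> E \<Psi> G x = gmult (Lap m \<rho> E \<Psi> x) (G x) - abr m E \<Psi> G x"
proof -
  define I where "I = (idx m :: ('n + nat) set)"
  define c where "c A = (-1::complex) ^ eps A / 2" for A :: "'n + nat"
  define X1 where "X1 A B = gmult (gscale (c A) (dleft A (P A B) x)) (G x)" for A B
  define X2 where "X2 A B = gscale (1/2) (gmult (P A B x) (dleft A G x))" for A B
  define X3 where "X3 A B = gscale (1/2) (gmult (dleft A \<Psi> x) (Q G A B x))" for A B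
  define X4 where "X4 A B = gmult (\<Psi> x) (gscale (c A) (dleft A (Q G A B) x))" for A B
  have fI: "finite I" unfolding I_def by (rule finite_idx)
  have LapPsi: "Lap m \<rho> E \<Psi> x = gmult (rinv x) (\<Sum>A\<in>I. \<Sum>B\<in>I. gscale (c A) (dleft A (P A B) x))"
    by (simp add: Lap_def rinv_def P_def I_def c_def)
  have LapG: "Lap m \<rho> E G x = gmult (rinv x) (\<Sum>A\<in>I. \<Sum>B\<in>I. gscale (c A) (dleft A (Q G A B) x))"
    by (simp add: Lap_def rinv_def Q_def I_def c_def)
  have LapPG: "Lap m \<rho> E (smul \<Psi> G) x = gmult (rinv x) (\<Sum>A\<in>I. \<Sum>B\<in>I. X1 A B + X2 A B - X3 A B - X4 A B)"
  proof -
    have "Lap m \<rho> E (smul \<Psi> G) x = gmult (rinv x) (\<Sum>A\<in>I. \<Sum>B\<in>I. gscale (c A)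
       (dleft A (\<lambda>y. gmult (\<rho> y) (gmult (E A B y) (dleft B (smul \<Psi> G) y))) x))"
      by (simp add: Lap_def rinv_def I_def c_def)
    also have "\<dots> = gmult (rinv x) (\<Sum>A\<in>I. \<Sum>B\<in>I. X1 A B + X2 A B - X3 A B - X4 A B)"
      unfolding X1_def X2_def X3_def X4_def c_def I_def
      by (intro arg_cong[where f="gmult (rinv x)"] sum.cong refl L3[OF G _ _ x])
    finally show ?thesis .
  qed
  have split: "(\<Sum>A\<in>I. \<Sum>B\<in>I. X1 A B + X2 A B - X3 A B - X4 A B) =
     (\<Sum>A\<in>I. \<Sum>B\<in>I. X1 A B) + (\<Sum>A\<in>I. \<Sum>B\<in>I. X2 A B) - (\<Sum>A\<in>I. \<Sum>B\<in>I. X3 A B) - (\<Sum>A\<in>I. \<Sum>B\<in>I. X4 A B)"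
    by (simp only: sum.distrib sum_subtractf)
  have T1: "gmult (rinv x) (\<Sum>A\<in>I. \<Sum>B\<in>I. X1 A B) = gmult (Lap m \<rho> E \<Psi> x) (G x)"
    unfolding LapPsi X1_def by (simp only: gmult_sum_left[symmetric] gmult_assoc)
  have T4: "gmult (rinv x) (\<Sum>A\<in>I. \<Sum>B\<in>I. X4 A B) = gmult (\<Psi> x) (Lap m \<rho> E G x)"
  proof -
    have "gmult (rinv x) (\<Sum>A\<in>I. \<Sum>B\<in>I. X4 A B) = gmult (gmult (rinv x) (\<Psi> x)) (\<Sum>A\<in>I. \<Sum>B\<in>I. gscale (c A) (dleft A (Q G A B) x))"
      unfolding X4_def by (simp only: gmult_sum_right[symmetric] gmult_assoc)
    also have "\<dots> = gmult (\<Psi> x) (Lap m \<rho> E G x)"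
    proof -
      have comm: "gmult (rinv x) (\<Psi> x) = gmult (\<Psi> x) (rinv x)" by (rule gmult_comm_ev[OF rinv_par[OF x]])
      show ?thesis unfolding LapG comm by (simp only: gmult_assoc)
    qed
    finally show ?thesis .
  qed
  have T2: "gmult (rinv x) (\<Sum>A\<in>I. \<Sum>B\<in>I. X2 A B) = gscale (1/2) (\<Sum>A\<in>I. \<Sum>B\<in>I. gmult (gmult (E A B x) (dleft B \<Psi> x)) (dleft A G x))"
  proof -
    have "gmult (rinv x) (X2 A B) = gscale (1/2) (gmult (gmult (E A B x) (dleft B \<Psi> x)) (dleft A G x))"
      if A: "A \<in> I" and B: "B \<in> I" for A B
    proof -
      have "gmult (rinv x) (P A B x) = gmult (E A B x) (dleft B \<Psi> x)"
        unfolding P_def using A B unfolding I_def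
        by (intro rinv_rho_mult[OF x] supp_EdG[OF _ _ x Psi_supp])
      thus ?thesis unfolding X2_def by (simp only: gmult_scale_right gmult_assoc[symmetric])
    qed
    thus ?thesis by (simp add: gmult_sum_right gscale_sum)
  qed
  have T3: "gmult (rinv x) (\<Sum>A\<in>I. \<Sum>B\<in>I. X3 A B) = gscale (1/2) (abr m E \<Psi> G x)"
  proof -
    have "gmult (rinv x) (X3 A B) = gscale (1/2) (gmult (gmult (dright A \<Psi> x) (E A B x)) (dleft B G x))"
      if A: "A \<in> I" and B: "B \<in> I" for A B
    proof -
      have "gmult (rinv x) (Q G A B x) = gmult (E A B x) (dleft B G x)"
        unfolding Q_def using A B unfolding I_def
        by (intro rinv_rho_mult[OF x] supp_EdG[OF _ _ x Gs])
      moreover have "gmult (rinv x) (gmult (dleft A \<Psi> x) (Q G A B x)) = gmult (dleft A \<Psi> x) (gmult (rinv x) (Q G A B x))"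
        by (simp only: gmult_assoc[symmetric] gmult_comm_ev[OF rinv_par[OF x], of "dleft A \<Psi> x"])
      ultimately show ?thesis unfolding X3_def dright_Psi[OF x]
        by (simp only: gmult_scale_right gmult_assoc)
    qed
    thus ?thesis by (simp add: gmult_sum_right gscale_sum abr_def I_def)
  qed
  have T2': "(\<Sum>A\<in>I. \<Sum>B\<in>I. gmult (gmult (E A B x) (dleft B \<Psi> x)) (dleft A G x)) = gscale (-1) (abr m E \<Psi> G x)"
  proof -
    have "(\<Sum>A\<in>I. \<Sum>B\<in>I. gmult (gmult (E A B x) (dleft B \<Psi> x)) (dleft A G x))
        = (\<Sum>A\<in>I. \<Sum>B\<in>I. gscale (-1) (gmult (gmult (dright B \<Psi> x) (E B A x)) (dleft A G x)))"
      by (intro sum.cong refl) (simp add: Esign[OF _ _ x] I_def dright_Psi[OF x] gmult_scale_left)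
    also have "\<dots> = (\<Sum>B\<in>I. \<Sum>A\<in>I. gscale (-1) (gmult (gmult (dright B \<Psi> x) (E B A x)) (dleft A G x)))"
      by (rule sum.swap)
    also have "\<dots> = gscale (-1) (abr m E \<Psi> G x)"
      by (simp add: abr_def I_def gscale_sum)
    finally show ?thesis .
  qed
  have "commLap m \<rho> E \<Psi> G x = Lap m \<rho> E (smul \<Psi> G) x + gmult (\<Psi> x) (Lap m \<rho> E G x)"
    by (simp add: commLap_def smul_def)
  also have "\<dots> = gmult (Lap m \<rho> E \<Psi> x) (G x) + gscale (1/2) (gscale (-1) (abr m E \<Psi> G x))
      - gscale (1/2) (abr m E \<Psi> G x) - gmult (\<Psi> x) (Lap m \<rho> E G x) + gmult (\<Psi> x) (Lap m \<rho> E G x)"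
    unfolding LapPG split gmult_add_right gmult_diff_right T1 T4 T3 T2 T2' ..
  also have "\<dots> = gmult (Lap m \<rho> E \<Psi> x) (G x) - abr m E \<Psi> G x"
    by (rule ext) (simp add: algebra_simps)
  finally show ?thesis .
qed

end

lemma gmult_zero_fun[simp]: "gmult (\<lambda>a. 0) c = 0" "gmult c (\<lambda>a. 0) = 0"
  using gmult_zero_left[of c] gmult_zero_right[of c] by (simp_all add: zero_fun_def)

fun pw :: "(nat \<Rightarrow> gr) \<Rightarrow> nat \<Rightarrow> nat \<Rightarrow> gr" where
  "pw y 0 k = (if k = 0 then gone else 0)"
| "pw y (Suc i) k = (\<Sum>l\<le>k. gmult (y l) (pw y i (k - l)))"

lemma sser_pow_pw: "sser_pow P i n x = pw (\<lambda>l. P l x) i n"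
  by (induction i arbitrary: n) (auto simp: sser_mult_def)

lemma pw_par: assumes "\<And>l. par 0 (y l)" shows "par 0 (pw y i k)"
proof (induction i arbitrary: k)
  case 0 show ?case by (simp add: par_gone par_zero)
next
  case (Suc i)
  have "par 0 (gmult (y l) (pw y i (k - l)))" for l using par_gmult[OF assms Suc.IH] by simp
  thus ?case by (simp only: pw.simps) (rule par_sum)
qed

lemma pw_supp: assumes "\<And>l. supp m (y l)" shows "supp m (pw y i k)"
proof (induction i arbitrary: k)
  case 0 show ?case by (simp add: supp_gone supp_zero)
next
  case (Suc i)
  have "supp m (gmult (y l) (pw y i (k - l)))" for l using supp_gmult[OF assms Suc.IH] by simp
  thus ?case by (simp only: pw.simps) (rule supp_sum)
qed

lemma pw_zero: "y 0 = 0 \<Longrightarrow> k < i \<Longrightarrow> pw y i k = 0"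
proof (induction i arbitrary: k)
  case 0 thus ?case by simp
next
  case (Suc i)
  have "gmult (y l) (pw y i (k - l)) = 0" if "l \<le> k" for l
  proof (cases l)
    case 0 thus ?thesis using Suc by simp
  next
    case (Suc l') thus ?thesis using Suc.IH[of "k - l"] Suc.prems that by simp
  qed
  thus ?case by simp
qed

lemma tri_swap: fixes k :: nat and f :: "nat \<Rightarrow> nat \<Rightarrow> 'a::comm_monoid_add"
  shows "(\<Sum>l\<le>k. \<Sum>l'\<le>k - l. f l l') = (\<Sum>l'\<le>k. \<Sum>l\<le>k - l'. f l l')"
proof -
  have e: "(\<Sum>l'\<le>k - l. g l') = (\<Sum>l'\<le>k. if l + l' \<le> k then g l' else 0)" if "l \<le> k" for l :: nat and g :: "nat \<Rightarrow> 'a"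
  proof -
    have "{l' \<in> {..k}. l + l' \<le> k} = {..k - l}" using that by auto
    thus ?thesis using sum.inter_filter[of "{..k}" g "\<lambda>l'. l + l' \<le> k"] by simp
  qed
  have "(\<Sum>l\<le>k. \<Sum>l'\<le>k - l. f l l') = (\<Sum>l\<le>k. \<Sum>l'\<le>k. if l + l' \<le> k then f l l' else 0)"
    by (rule sum.cong[OF refl]) (rule e, simp)
  also have "\<dots> = (\<Sum>l'\<le>k. \<Sum>l\<le>k. if l + l' \<le> k then f l l' else 0)"
    by (rule sum.swap)
  also have "\<dots> = (\<Sum>l'\<le>k. \<Sum>l\<le>k - l'. f l l')"
    by (rule sum.cong[OF refl]) (subst e, simp, simp add: add.commute)
  finally show ?thesis .
qed

lemma Zlemma:
  assumes yev: "\<And>l. par 0 (y l)"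
    and Z0: "\<And>k. Z 0 k = 0"
    and ZS: "\<And>i k. Z (Suc i) k = (\<Sum>l\<le>k. gmult (d l) (pw y i (k - l)) + gmult (y l) (Z i (k - l)))"
  shows "Z i k = gscale (of_nat i) (\<Sum>l\<le>k. gmult (d l) (pw y (i - 1) (k - l)))"
proof (induction i arbitrary: k)
  case 0 thus ?case by (simp add: Z0)
next
  case (Suc i)
  have "(\<Sum>l\<le>k. gmult (y l) (Z i (k - l))) = gscale (of_nat i) (\<Sum>l\<le>k. \<Sum>l'\<le>k - l. gmult (y l) (gmult (d l') (pw y (i - 1) (k - l - l'))))"
    by (simp add: Suc.IH gmult_scale_right gmult_sum_right gscale_sum)
  also have "(\<Sum>l\<le>k. \<Sum>l'\<le>k - l. gmult (y l) (gmult (d l') (pw y (i - 1) (k - l - l'))))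
      = (\<Sum>l'\<le>k. \<Sum>l\<le>k - l'. gmult (y l) (gmult (d l') (pw y (i - 1) (k - l - l'))))"
    by (rule tri_swap)
  also have "\<dots> = (\<Sum>l'\<le>k. \<Sum>l\<le>k - l'. gmult (d l') (gmult (y l) (pw y (i - 1) (k - l' - l))))"
  proof (intro sum.cong refl)
    fix l' l
    have "gmult (y l) (gmult (d l') z) = gmult (d l') (gmult (y l) z)" for z
      by (simp only: gmult_assoc[symmetric] gmult_comm_ev[OF yev[of l], of "d l'"])
    moreover have "k - l - l' = k - l' - l" by simp
    ultimately show "gmult (y l) (gmult (d l') (pw y (i - 1) (k - l - l'))) = gmult (d l') (gmult (y l) (pw y (i - 1) (k - l' - l)))"
      by simp
  qed
  also have "\<dots> = (\<Sum>l'\<le>k. gmult (d l') (\<Sum>l\<le>k - l'. gmult (y l) (pw y (i - 1) (k - l' - l))))"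
    by (simp add: gmult_sum_right)
  finally have e: "(\<Sum>l\<le>k. gmult (y l) (Z i (k - l))) =
     gscale (of_nat i) (\<Sum>l'\<le>k. gmult (d l') (\<Sum>l\<le>k - l'. gmult (y l) (pw y (i - 1) (k - l' - l))))" .
  have e2: "gscale (of_nat i) (\<Sum>l'\<le>k. gmult (d l') (\<Sum>l\<le>k - l'. gmult (y l) (pw y (i - 1) (k - l' - l))))
      = gscale (of_nat i) (\<Sum>l'\<le>k. gmult (d l') (pw y i (k - l')))"
  proof (cases i)
    case 0 thus ?thesis by simp
  next
    case (Suc j) thus ?thesis by simp
  qed
  have "Z (Suc i) k = (\<Sum>l\<le>k. gmult (d l) (pw y i (k - l))) + (\<Sum>l\<le>k. gmult (y l) (Z i (k - l)))"
    by (simp add: ZS sum.distrib)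
  also have "\<dots> = (\<Sum>l\<le>k. gmult (d l) (pw y i (k - l))) + gscale (of_nat i) (\<Sum>l'\<le>k. gmult (d l') (pw y i (k - l')))"
    using e e2 by simp
  also have "\<dots> = gscale (of_nat (Suc i)) (\<Sum>l\<le>k. gmult (d l) (pw y (Suc i - 1) (k - l)))"
    by (rule ext) (simp add: algebra_simps)
  finally show ?case .
qed

definition Ex :: "(nat \<Rightarrow> gr) \<Rightarrow> nat \<Rightarrow> gr" where
  "Ex y j = (\<Sum>i\<le>j. gscale (1 / fact i) (pw y i j))"

lemma Blemma:
  assumes y0: "y 0 = 0" and d0: "d 0 = 0"
    and Z: "\<And>i k. Z i k = gscale (of_nat i) (\<Sum>l\<le>k. gmult (d l) (pw y (i - 1) (k - l)))"
  shows "(\<Sum>i\<le>k. gscale (1 / fact i) (Z i k)) = (\<Sum>l\<le>k. gmult (d l) (Ex y (k - l)))"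
proof (cases k)
  case 0 thus ?thesis by (simp add: Z d0)
next
  case (Suc n)
  have "(\<Sum>i\<le>k. gscale (1 / fact i) (Z i k)) = gscale (1 / fact 0) (Z 0 k) + (\<Sum>j\<le>n. gscale (1 / fact (Suc j)) (Z (Suc j) k))"
    unfolding Suc by (rule sum.atMost_Suc_shift)
  also have "\<dots> = (\<Sum>j\<le>n. gscale (1 / fact j) (\<Sum>l\<le>k. gmult (d l) (pw y j (k - l))))"
  proof -
    have "gscale (1 / fact (Suc j)) (Z (Suc j) k) = gscale (1 / fact j) (\<Sum>l\<le>k. gmult (d l) (pw y j (k - l)))" for j
    proof -
      have nz: "(fact j::complex) + fact j * of_nat j \<noteq> 0"
      proof -
        have "(fact j::complex) + fact j * of_nat j = fact j * of_nat (Suc j)" by (simp add: algebra_simps)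
        moreover have "(fact j::complex) * of_nat (Suc j) \<noteq> 0" by (simp del: of_nat_Suc)
        ultimately show ?thesis by simp
      qed
      have "(1 / fact (Suc j)) * of_nat (Suc j) = (1 / fact j :: complex)"
        using nz by (simp add: field_simps)
      thus ?thesis by (simp add: Z del: of_nat_Suc fact_Suc)
    qed
    thus ?thesis by (simp add: Z)
  qed
  also have "\<dots> = (\<Sum>j\<le>n. \<Sum>l\<le>k. gmult (d l) (gscale (1 / fact j) (pw y j (k - l))))"
    by (simp only: gscale_sum gmult_scale_right)
  also have "\<dots> = (\<Sum>l\<le>k. \<Sum>j\<le>n. gmult (d l) (gscale (1 / fact j) (pw y j (k - l))))"
    by (rule sum.swap)
  also have "\<dots> = (\<Sum>l\<le>k. gmult (d l) (Ex y (k - l)))"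
  proof (intro sum.cong refl)
    fix l assume l: "l \<in> {..k}"
    show "(\<Sum>j\<le>n. gmult (d l) (gscale (1 / fact j) (pw y j (k - l)))) = gmult (d l) (Ex y (k - l))"
    proof (cases l)
      case 0 thus ?thesis by (simp add: d0)
    next
      case (Suc l')
      have sub: "{..k - l} \<subseteq> {..n}" using Suc \<open>k = Suc n\<close> by auto
      have "(\<Sum>j\<le>n. gmult (d l) (gscale (1 / fact j) (pw y j (k - l)))) = (\<Sum>j\<le>k - l. gmult (d l) (gscale (1 / fact j) (pw y j (k - l))))"
        by (rule sum.mono_neutral_right) (use sub pw_zero[of y, OF y0] in auto)
      thus ?thesis by (simp add: Ex_def gmult_sum_right)
    qed
  qed
  finally show ?thesis .
qed

context BV
begin

lemma abr_add:
  assumes "sm U F" "sm U G" "x \<in> U"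
  shows "abr m E \<Psi> (\<lambda>y. F y + G y) x = abr m E \<Psi> F x + abr m E \<Psi> G x"
  unfolding abr_def by (simp add: dleft_add[OF U assms] gmult_add_right sum.distrib)

lemma abr_scale:
  assumes "sm U F" "x \<in> U"
  shows "abr m E \<Psi> (\<lambda>y. gscale c (F y)) x = gscale c (abr m E \<Psi> F x)"
  unfolding abr_def by (simp add: dleft_scale[OF U assms] gmult_scale_right gscale_sum)

lemma abr_zero: "abr m E \<Psi> (\<lambda>y. 0) x = 0"
  unfolding abr_def dleft_zero[OF U] by simp

lemma dleft_gone: "dleft B (\<lambda>y. gone) x = 0"
proof (cases B)
  case (Inl a) thus ?thesis by (simp add: dleft_const_Inl[OF U])
next
  case (Inr \<alpha>) thus ?thesis by (simp add: dleft_Inr_dI dI_gone)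
qed

lemma abr_gone: "abr m E \<Psi> (\<lambda>y. gone) x = 0"
  unfolding abr_def dleft_gone by simp

lemma abr_sum:
  assumes "finite S" "\<And>i. i \<in> S \<Longrightarrow> sm U (F i)" "x \<in> U"
  shows "abr m E \<Psi> (\<lambda>y. \<Sum>i\<in>S. F i y) x = (\<Sum>i\<in>S. abr m E \<Psi> (F i) x)"
  unfolding abr_def
  by (simp add: dleft_sum[OF U assms] gmult_sum_right sum.swap[of _ S])

lemma abr_gmult:
  assumes F: "sm U F" and G: "sm U G" and x: "x \<in> U" and p: "par 0 (F x)"
  shows "abr m E \<Psi> (\<lambda>y. gmult (F y) (G y)) x = gmult (abr m E \<Psi> F x) (G x) + gmult (F x) (abr m E \<Psi> G x)"
proof -
  have "gmult (gmult (dright A \<Psi> x) (E A B x)) (dleft B (\<lambda>y. gmult (F y) (G y)) x)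
     = gmult (gmult (gmult (dright A \<Psi> x) (E A B x)) (dleft B F x)) (G x)
       + gmult (F x) (gmult (gmult (dright A \<Psi> x) (E A B x)) (dleft B G x))" for A B
  proof -
    have "dleft B (\<lambda>y. gmult (F y) (G y)) x = gmult (dleft B F x) (G x) + gscale ((-1) ^ (eps B * 0)) (gmult (F x) (dleft B G x))"
      by (rule dleft_gmult[OF U F G x p])
    moreover have "gmult (gmult (dright A \<Psi> x) (E A B x)) (gmult (F x) z) = gmult (F x) (gmult (gmult (dright A \<Psi> x) (E A B x)) z)" for z
    proof -
      have c: "gmult (gmult (dright A \<Psi> x) (E A B x)) (F x) = gmult (F x) (gmult (dright A \<Psi> x) (E A B x))"
        by (rule gmult_comm_ev[OF p, symmetric])
      have "gmult (gmult (dright A \<Psi> x) (E A B x)) (gmult (F x) z) = gmult (gmult (gmult (dright A \<Psi> x) (E A B x)) (F x)) z"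
        by (rule gmult_assoc[symmetric])
      also have "\<dots> = gmult (F x) (gmult (gmult (dright A \<Psi> x) (E A B x)) z)"
        unfolding c by (rule gmult_assoc)
      finally show ?thesis .
    qed
    ultimately show ?thesis by (simp add: gmult_add_right gmult_assoc)
  qed
  thus ?thesis unfolding abr_def by (simp add: sum.distrib gmult_sum_left gmult_sum_right)
qed

lemma dleft_gpow:
  assumes s: "sm U s" and x: "x \<in> U" and p: "par 0 (s x)"
  shows "dleft B (\<lambda>y. gpow (s y) k) x = gscale (of_nat k) (gmult (dleft B s x) (gpow (s x) (k - 1)))"
proof (induction k)
  case 0 show ?case by (simp add: dleft_gone)
next
  case (Suc k)
  have "dleft B (\<lambda>y. gpow (s y) (Suc k)) x = gmult (dleft B s x) (gpow (s x) k)
      + gscale ((-1) ^ (eps B * 0)) (gmult (s x) (dleft B (\<lambda>y. gpow (s y) k) x))"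
    by (simp only: gpow.simps) (rule dleft_gmult[OF U s sm_gpow[OF U s] x p])
  also have "gmult (s x) (dleft B (\<lambda>y. gpow (s y) k) x) = gscale (of_nat k) (gmult (dleft B s x) (gpow (s x) k))"
  proof (cases k)
    case 0 thus ?thesis using Suc by simp
  next
    case (Suc j)
    have "gmult (s x) (gmult (dleft B s x) (gpow (s x) j)) = gmult (dleft B s x) (gpow (s x) (Suc j))"
      by (simp only: gpow.simps gmult_assoc[symmetric] gmult_comm_ev[OF p, of "dleft B s x"])
    thus ?thesis unfolding Suc.IH using Suc by (simp add: gmult_scale_right)
  qed
  finally show ?case by (rule trans) (rule ext, simp add: algebra_simps)
qed

lemma sum_shift_gr: "(\<Sum>k\<le>Suc n. f k) = f 0 + (\<Sum>k\<le>n. f (Suc k))"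
  by (rule sum.atMost_Suc_shift)

lemma dleft_expser:
  assumes X: "sm U X" and Xs: "\<And>y. y \<in> U \<Longrightarrow> supp m (X y)" and Xp: "\<And>y. y \<in> U \<Longrightarrow> par 0 (X y)" and x: "x \<in> U"
  shows "dleft B (\<lambda>y. \<Sum>k\<le>m. gscale (1 / fact k) (gpow (gsoul (X y)) k)) x
     = gmult (dleft B (\<lambda>y. gsoul (X y)) x) (\<Sum>k\<le>m. gscale (1 / fact k) (gpow (gsoul (X x)) k))"
proof -
  define s where "s = (\<lambda>y. gsoul (X y))"
  have ssm: "sm U s" unfolding s_def by (rule sm_soul[OF U X])
  have sp: "par 0 (s x)" unfolding s_def by (rule par_soul[OF Xp[OF x]])
  have ss: "\<And>y. y \<in> U \<Longrightarrow> supp m (s y)" unfolding s_def by (rule supp_soul[OF Xs])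
  have sd: "\<And>y. y \<in> U \<Longrightarrow> dg 1 (s y)" unfolding s_def by (rule dg_soul[OF Xs])
  define ds where "ds = dleft B s x"
  have nil: "gmult ds (gpow (s x) m) = 0"
  proof -
    have "dleft B (\<lambda>y. gpow (s y) (Suc m)) x = dleft B (\<lambda>y. 0) x"
      by (rule dleft_local[OF U x]) (metis gpow_nil ss sd lessI)
    hence "gscale (of_nat (Suc m)) (gmult ds (gpow (s x) m)) = 0"
      unfolding dleft_gpow[OF ssm x sp] dleft_zero[OF U] ds_def by simp
    thus ?thesis by (metis gscale_gscale gscale_one gscale_zero(2) nonzero_divide_eq_eq of_nat_neq_0 zero_neq_one divide_self_if)
  qed
  have "dleft B (\<lambda>y. \<Sum>k\<le>m. gscale (1 / fact k) (gpow (s y) k)) x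
      = (\<Sum>k\<le>m. gscale (1 / fact k) (gscale (of_nat k) (gmult ds (gpow (s x) (k - 1)))))"
    by (simp add: dleft_sum[OF U] dleft_scale[OF U] sm_scale[OF U] sm_gpow[OF U ssm] x dleft_gpow[OF ssm x sp] ds_def)
  also have "\<dots> = gmult ds (\<Sum>k\<le>m. gscale (1 / fact k) (gpow (s x) k))"
  proof (cases m)
    case 0 thus ?thesis using nil by simp
  next
    case (Suc n)
    have "(\<Sum>k\<le>m. gscale (1 / fact k) (gscale (of_nat k) (gmult ds (gpow (s x) (k - 1)))))
        = (\<Sum>k\<le>n. gscale (1 / fact k) (gmult ds (gpow (s x) k)))"
    proof -
      have "gscale (1 / fact (Suc k)) (gscale (of_nat (Suc k)) z) = gscale (1 / fact k) z" for k z
      proof -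
        have "(1 / fact (Suc k)) * of_nat (Suc k) = (1 / fact k :: complex)"
          by (simp add: field_simps del: of_nat_Suc)
        thus ?thesis by simp
      qed
      thus ?thesis unfolding Suc sum_shift_gr by simp
    qed
    also have "\<dots> = (\<Sum>k\<le>m. gscale (1 / fact k) (gmult ds (gpow (s x) k)))"
      unfolding Suc sum.atMost_Suc nil[unfolded Suc] by simp
    finally show ?thesis by (simp add: gmult_sum_right gmult_scale_right)
  qed
  finally show ?thesis unfolding s_def ds_def .
qed

lemma dI_soul: "dI \<alpha> (gsoul a) = dI \<alpha> a"
  by (rule ext) (simp add: dI_def gsoul_def)

lemma dleft_gexp:
  assumes X: "sm U X" and Xs: "\<And>y. y \<in> U \<Longrightarrow> supp m (X y)" and Xp: "\<And>y. y \<in> U \<Longrightarrow> par 0 (X y)" and x: "x \<in> U"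
  shows "dleft B (\<lambda>y. gexp m (X y)) x = gmult (dleft B X x) (gexp m (X x))"
proof -
  define S where "S = (\<lambda>y. \<Sum>k\<le>m. gscale (1 / fact k) (gpow (gsoul (X y)) k))"
  define e where "e = (\<lambda>y. exp (X y {}))"
  have ge: "(\<lambda>y. gexp m (X y)) = (\<lambda>y. gscale (e y) (S y))" by (simp add: gexp_def S_def e_def)
  have Ssm: "sm U S" unfolding S_def by (intro sm_sum[OF U] sm_scale[OF U] sm_gpow[OF U] sm_soul[OF U X])
  have Ssupp: "supp m (S x)" unfolding S_def by (intro supp_sum supp_scale supp_gpow supp_soul Xs x)
  have dS: "dleft B S x = gmult (dleft B (\<lambda>y. gsoul (X y)) x) (S x)"
    unfolding S_def by (rule dleft_expser[OF X Xs Xp x])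
  show ?thesis
  proof (cases B)
    case (Inr \<alpha>)
    have "dleft B (\<lambda>y. gexp m (X y)) x = gscale (e x) (dleft B S x)"
      unfolding ge Inr by (rule dleft_scale_fun_Inr[OF U])
    moreover have "dleft B (\<lambda>y. gsoul (X y)) x = dleft B X x"
      unfolding Inr dleft_Inr_dI by (rule dI_soul)
    moreover have "gexp m (X x) = gscale (e x) (S x)" by (simp add: gexp_def S_def e_def)
    ultimately show ?thesis unfolding dS by (simp add: gmult_scale_right)
  next
    case (Inl a)
    have esm: "smooth_on U e" unfolding e_def by (rule smooth_exp[OF U sm_coeff[OF U X]])
    have pe: "pd a e x = e x * pd a (\<lambda>y. X y {}) x"
      unfolding e_def by (rule pd_exp[OF sm_diff_at[OF U X x]])
    have dX: "dleft (Inl a) X x = gscale (pd a (\<lambda>y. X y {}) x) gone + dleft (Inl a) (\<lambda>y. gsoul (X y)) x"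
    proof (rule ext)
      fix J
      show "dleft (Inl a) X x J = (gscale (pd a (\<lambda>y. X y {}) x) gone + dleft (Inl a) (\<lambda>y. gsoul (X y)) x) J"
        by (cases "J = {}") (simp_all add: dl_Inl gone_def gsoul_def pd_const)
    qed
    have "dleft B (\<lambda>y. gexp m (X y)) x = gscale (pd a e x) (S x) + gscale (e x) (dleft (Inl a) S x)"
      unfolding ge Inl by (rule dleft_scale_fun_Inl[OF U esm Ssm x])
    also have "\<dots> = gmult (dleft B X x) (gscale (e x) (S x))"
      unfolding Inl dX dS[unfolded Inl] pe
      by (simp add: gmult_add_left gmult_scale_left gmult_scale_right gmult_gone_left[OF Ssupp] gscale_add mult.commute)
    finally show ?thesis using ge by (metis)
  qed
qed

lemma abr_gexp:
  assumes X: "sm U X" and Xs: "\<And>y. y \<in> U \<Longrightarrow> supp m (X y)" and Xp: "\<And>y. y \<in> U \<Longrightarrow> par 0 (X y)" and x: "x \<in> U"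
  shows "abr m E \<Psi> (\<lambda>y. gexp m (X y)) x = gmult (abr m E \<Psi> X x) (gexp m (X x))"
  unfolding abr_def by (simp add: dleft_gexp[OF assms] gmult_sum_left gmult_assoc)

end

definition Yv :: "(nat \<Rightarrow> 'n sfun) \<Rightarrow> nat \<Rightarrow> 'n sfun" where
  "Yv X = (\<lambda>j. if j = 0 then (\<lambda>_. 0) else X j)"

lemma sser_exp_Ex: "sser_exp m X n y = gmult (gexp m (X 0 y)) (Ex (\<lambda>l. Yv X l y) n)"
  unfolding sser_exp_def Ex_def Yv_def sser_pow_pw by simp

lemma Yv0: "Yv X 0 y = 0" by (simp add: Yv_def)
lemma YvS: "l \<noteq> 0 \<Longrightarrow> Yv X l = X l" by (simp add: Yv_def)

lemma I1:
  assumes p: "\<And>l. par 0 (X l x)"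
  shows "gscale (of_nat k) (sser_exp m X k x) = (\<Sum>l\<le>k. gscale (of_nat l) (gmult (X l x) (sser_exp m X (k - l) x)))"
proof -
  define yv where "yv = (\<lambda>l. Yv X l x)"
  define g where "g = gexp m (X 0 x)"
  have yev: "par 0 (yv l)" for l unfolding yv_def Yv_def using p by (auto simp: par_zero zero_fun_def[symmetric])
  have y0: "yv 0 = 0" unfolding yv_def by (rule Yv0)
  define Z where "Z i k = gscale (of_nat k) (pw yv i k)" for i k
  define d where "d l = gscale (of_nat l) (yv l)" for l
  have Zf: "Z i k = gscale (of_nat i) (\<Sum>l\<le>k. gmult (d l) (pw yv (i - 1) (k - l)))" for i k
  proof (rule Zlemma[of yv])
    show "\<And>l. par 0 (yv l)" by (rule yev)
    show "\<And>k. Z 0 k = 0" unfolding Z_def by (auto intro!: ext)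
    fix i k
    have "Z (Suc i) k = (\<Sum>l\<le>k. gscale (of_nat k) (gmult (yv l) (pw yv i (k - l))))"
      unfolding Z_def by (simp add: gscale_sum)
    also have "\<dots> = (\<Sum>l\<le>k. gmult (d l) (pw yv i (k - l)) + gmult (yv l) (Z i (k - l)))"
    proof (intro sum.cong refl)
      fix l assume "l \<in> {..k}"
      hence "(of_nat k :: complex) = of_nat l + of_nat (k - l)" by (simp add: of_nat_diff)
      thus "gscale (of_nat k) (gmult (yv l) (pw yv i (k - l))) = gmult (d l) (pw yv i (k - l)) + gmult (yv l) (Z i (k - l))"
        unfolding d_def Z_def by (simp add: gmult_scale_left gmult_scale_right gscale_add_left)
    qed
    finally show "Z (Suc i) k = (\<Sum>l\<le>k. gmult (d l) (pw yv i (k - l)) + gmult (yv l) (Z i (k - l)))" .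
  qed
  have B: "(\<Sum>i\<le>k. gscale (1 / fact i) (Z i k)) = (\<Sum>l\<le>k. gmult (d l) (Ex yv (k - l)))"
    by (rule Blemma[OF y0 _ Zf]) (simp add: d_def)
  have B': "gscale (of_nat k) (Ex yv k) = (\<Sum>l\<le>k. gmult (d l) (Ex yv (k - l)))"
  proof -
    have "gscale (of_nat k) (Ex yv k) = (\<Sum>i\<le>k. gscale (1 / fact i) (Z i k))"
      by (simp add: Z_def Ex_def gscale_sum mult.commute)
    thus ?thesis using B by simp
  qed
  have gp: "par 0 g" unfolding g_def by (rule par_gexp[OF p])
  have "gscale (of_nat k) (sser_exp m X k x) = gmult g (gscale (of_nat k) (Ex yv k))"
    by (simp add: sser_exp_Ex g_def yv_def gmult_scale_right)
  also have "\<dots> = (\<Sum>l\<le>k. gscale (of_nat l) (gmult (yv l) (gmult g (Ex yv (k - l)))))"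
  proof -
    have "gmult g (gmult (d l) z) = gscale (of_nat l) (gmult (yv l) (gmult g z))" for l z
      unfolding d_def gmult_scale_left gmult_scale_right
      by (simp only: gmult_assoc[symmetric] gmult_comm_ev[OF gp, of "yv l"])
    thus ?thesis unfolding B' by (simp add: gmult_sum_right)
  qed
  also have "\<dots> = (\<Sum>l\<le>k. gscale (of_nat l) (gmult (X l x) (sser_exp m X (k - l) x)))"
  proof (intro sum.cong refl)
    fix l
    show "gscale (of_nat l) (gmult (yv l) (gmult g (Ex yv (k - l)))) = gscale (of_nat l) (gmult (X l x) (sser_exp m X (k - l) x))"
      by (cases "l = 0") (simp_all add: yv_def YvS sser_exp_Ex g_def)
  qed
  finally show ?thesis .
qed

context BV
begin

lemma sm_sser_pow: "(\<And>j. sm U (R j)) \<Longrightarrow> sm U (sser_pow R i k)"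
proof (induction i arbitrary: k)
  case 0 show ?case by (cases "k = 0") (simp_all add: sm_const[OF U])
next
  case (Suc i)
  show ?case by (simp add: sser_mult_def) (intro sm_sum[OF U] sm_gmult[OF U] Suc)
qed

lemma sm_Yv: "(\<And>j. sm U (X j)) \<Longrightarrow> sm U (Yv X j)"
  by (cases "j = 0") (simp_all add: Yv_def sm_const[OF U])

lemma sm_sser_exp:
  assumes "\<And>j. sm U (X j)" shows "sm U (sser_exp m X n)"
proof -
  have e: "sser_exp m X n = (\<lambda>y. gmult (gexp m (X 0 y)) (\<Sum>k\<le>n. gscale (1 / fact k) (sser_pow (Yv X) k n y)))"
    by (simp add: sser_exp_def Yv_def)
  show ?thesis unfolding e
    by (intro sm_gmult[OF U] sm_gexp[OF U] sm_sum[OF U] sm_scale[OF U] sm_sser_pow sm_Yv assms)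
qed

lemma supp_sser_exp:
  assumes "\<And>j. supp m (X j y)" shows "supp m (sser_exp m X n y)"
proof -
  have "\<And>l. supp m (Yv X l y)" using assms by (auto simp: Yv_def supp_zero zero_fun_def[symmetric])
  thus ?thesis unfolding sser_exp_Ex Ex_def
    by (intro supp_gmult supp_gexp assms supp_sum supp_scale pw_supp)
qed

lemma par_sser_exp:
  assumes "\<And>j. par 0 (X j y)" shows "par 0 (sser_exp m X n y)"
proof -
  have "\<And>l. par 0 (Yv X l y)" using assms by (auto simp: Yv_def par_zero zero_fun_def[symmetric])
  hence "par (0 + 0) (sser_exp m X n y)" unfolding sser_exp_Ex Ex_def
    by (intro par_gmult par_gexp assms par_sum par_scale pw_par)
  thus ?thesis by simp
qed

lemma I2:
  assumes Xsm: "\<And>j. sm U (X j)" and Xs: "\<And>j y. y \<in> U \<Longrightarrow> supp m (X j y)"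
    and Xp: "\<And>j y. y \<in> U \<Longrightarrow> par 0 (X j y)" and x: "x \<in> U"
  shows "abr m E \<Psi> (sser_exp m X k) x = (\<Sum>l\<le>k. gmult (abr m E \<Psi> (X l) x) (sser_exp m X (k - l) x))"
proof -
  define R where "R = Yv X"
  define yv where "yv = (\<lambda>l. R l x)"
  define g where "g = gexp m (X 0 x)"
  have Rsm: "\<And>j. sm U (R j)" unfolding R_def by (rule sm_Yv[OF Xsm])
  have Rp: "\<And>j. par 0 (R j x)" unfolding R_def Yv_def using Xp[OF x] by (auto simp: par_zero zero_fun_def[symmetric])
  define Z where "Z i k = abr m E \<Psi> (sser_pow R i k) x" for i k
  define d where "d l = abr m E \<Psi> (R l) x" for l
  have Zf: "Z i k = gscale (of_nat i) (\<Sum>l\<le>k. gmult (d l) (pw yv (i - 1) (k - l)))" for i k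
  proof (rule Zlemma[of yv])
    show "\<And>l. par 0 (yv l)" unfolding yv_def by (rule Rp)
    show "\<And>k. Z 0 k = 0" unfolding Z_def by (simp add: abr_gone abr_zero)
    fix i k
    have "Z (Suc i) k = abr m E \<Psi> (\<lambda>y. \<Sum>l\<le>k. gmult (R l y) (sser_pow R i (k - l) y)) x"
      unfolding Z_def by (simp add: sser_mult_def)
    also have "\<dots> = (\<Sum>l\<le>k. abr m E \<Psi> (\<lambda>y. gmult (R l y) (sser_pow R i (k - l) y)) x)"
      by (rule abr_sum) (auto intro!: sm_gmult[OF U] Rsm sm_sser_pow x)
    also have "\<dots> = (\<Sum>l\<le>k. gmult (d l) (pw yv i (k - l)) + gmult (yv l) (Z i (k - l)))"
    proof (intro sum.cong refl)
      fix l
      show "abr m E \<Psi> (\<lambda>y. gmult (R l y) (sser_pow R i (k - l) y)) x = gmult (d l) (pw yv i (k - l)) + gmult (yv l) (Z i (k - l))"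
      proof -
        have h: "abr m E \<Psi> (\<lambda>y. gmult (R l y) (sser_pow R i (k - l) y)) x = gmult (d l) (sser_pow R i (k - l) x) + gmult (yv l) (Z i (k - l))"
          unfolding d_def Z_def yv_def by (rule abr_gmult[OF Rsm sm_sser_pow[OF Rsm] x Rp])
        have sp: "sser_pow R i (k - l) x = pw yv i (k - l)" by (simp add: sser_pow_pw yv_def)
        show ?thesis unfolding sp[symmetric] by (rule h)
      qed
    qed
    finally show "Z (Suc i) k = (\<Sum>l\<le>k. gmult (d l) (pw yv i (k - l)) + gmult (yv l) (Z i (k - l)))" .
  qed
  have d0: "d 0 = 0" unfolding d_def R_def Yv_def by (simp add: abr_zero)
  have y0: "yv 0 = 0" unfolding yv_def R_def by (rule Yv0)
  have B: "(\<Sum>i\<le>k. gscale (1 / fact i) (Z i k)) = (\<Sum>l\<le>k. gmult (d l) (Ex yv (k - l)))"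
    by (rule Blemma[OF y0 d0 Zf])
  have se: "sser_exp m X k = (\<lambda>y. gmult (gexp m (X 0 y)) (\<Sum>i\<le>k. gscale (1 / fact i) (sser_pow R i k y)))"
    by (simp add: sser_exp_def Yv_def R_def)
  have gp: "par 0 g" unfolding g_def by (rule par_gexp[OF Xp[OF x]])
  have Ssm: "sm U (\<lambda>y. \<Sum>i\<le>k. gscale (1 / fact i) (sser_pow R i k y))"
    by (intro sm_sum[OF U] sm_scale[OF U] sm_sser_pow Rsm)
  have "abr m E \<Psi> (sser_exp m X k) x = gmult (abr m E \<Psi> (\<lambda>y. gexp m (X 0 y)) x) (\<Sum>i\<le>k. gscale (1 / fact i) (sser_pow R i k x))
      + gmult g (abr m E \<Psi> (\<lambda>y. \<Sum>i\<le>k. gscale (1 / fact i) (sser_pow R i k y)) x)"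
    unfolding se g_def by (rule abr_gmult[OF sm_gexp[OF U Xsm] Ssm x par_gexp[OF Xp[OF x]]])
  also have "abr m E \<Psi> (\<lambda>y. \<Sum>i\<le>k. gscale (1 / fact i) (sser_pow R i k y)) x = (\<Sum>i\<le>k. gscale (1 / fact i) (Z i k))"
    unfolding Z_def by (simp add: abr_sum abr_scale sm_scale[OF U] sm_sser_pow[OF Rsm] x)
  also have "abr m E \<Psi> (\<lambda>y. gexp m (X 0 y)) x = gmult (abr m E \<Psi> (X 0) x) g"
    unfolding g_def by (rule abr_gexp[OF Xsm Xs Xp x])
  finally have main: "abr m E \<Psi> (sser_exp m X k) x = gmult (abr m E \<Psi> (X 0) x) (sser_exp m X k x)
      + (\<Sum>l\<le>k. gmult (d l) (sser_exp m X (k - l) x))"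
  proof -
    assume h: "abr m E \<Psi> (sser_exp m X k) x = gmult (gmult (abr m E \<Psi> (X 0) x) g) (\<Sum>i\<le>k. gscale (1 / fact i) (sser_pow R i k x))
      + gmult g (\<Sum>i\<le>k. gscale (1 / fact i) (Z i k))"
    have e1: "gmult (gmult (abr m E \<Psi> (X 0) x) g) (\<Sum>i\<le>k. gscale (1 / fact i) (sser_pow R i k x)) = gmult (abr m E \<Psi> (X 0) x) (sser_exp m X k x)"
      by (simp add: gmult_assoc se g_def)
    have e2: "gmult g (gmult (d l) z) = gmult (d l) (gmult g z)" for l z
      by (simp only: gmult_assoc[symmetric] gmult_comm_ev[OF gp, of "d l"])
    have e3: "gmult g (Ex yv j) = sser_exp m X j x" for j
      by (simp add: sser_exp_Ex g_def yv_def R_def)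
    show ?thesis unfolding h e1 B by (simp add: gmult_sum_right e2 e3)
  qed
  have split: "gmult (abr m E \<Psi> (X l) x) (sser_exp m X (k - l) x) =
      (if l = 0 then gmult (abr m E \<Psi> (X 0) x) (sser_exp m X k x) else 0) + gmult (d l) (sser_exp m X (k - l) x)" for l
    by (cases "l = 0") (simp add: d0, simp add: d_def R_def YvS)
  show ?thesis unfolding main split sum.distrib by (simp add: sum.delta)
qed

end

definition fin :: "gr \<Rightarrow> bool" where "fin a \<longleftrightarrow> (\<forall>K. infinite K \<longrightarrow> a K = 0)"

lemma fin_gmult: "fin (gmult a b)" by (simp add: fin_def gmult_infinite)
lemma fin_add: "fin a \<Longrightarrow> fin b \<Longrightarrow> fin (a + b)" by (simp add: fin_def)
lemma fin_scale: "fin a \<Longrightarrow> fin (gscale c a)" by (simp add: fin_def)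
lemma fin_zero: "fin 0" by (simp add: fin_def)
lemma fin_sum: "(\<And>i. i \<in> S \<Longrightarrow> fin (f i)) \<Longrightarrow> fin (\<Sum>i\<in>S. f i)"
  by (simp add: fin_def gsum_apply)
lemma supp_fin: "supp m a \<Longrightarrow> fin a" by (auto simp: fin_def dest: supp_finite)
lemma gmult_gone_left_fin: "fin a \<Longrightarrow> gmult gone a = a"
  by (rule ext) (simp add: gmult_gone_left_apply fin_def)

lemma gmult_cancel_fin:
  assumes s: "supp m g" and nz: "g {} \<noteq> 0" and e: "gmult g a = gmult g b" and fa: "fin a" and fb: "fin b"
  shows "a = b"
proof -
  have "gmult (gmult (ginv m g) g) a = gmult (gmult (ginv m g) g) b"
    using e by (simp add: gmult_assoc)
  thus ?thesis using ginv_left[OF s nz] gmult_gone_left_fin[OF fa] gmult_gone_left_fin[OF fb] by simp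
qed

lemma fin_abr: "fin (abr m E F G x)"
  unfolding abr_def by (intro fin_sum fin_gmult)
lemma fin_Lap: "fin (Lap m \<rho> E F x)"
  unfolding Lap_def by (rule fin_gmult)

context BV
begin

lemma sm_abr': "sm U F \<Longrightarrow> sm U G \<Longrightarrow> sm U (abr m E F G)"
  unfolding abr_def
  by (intro sm_sum[OF U] sm_gmult[OF U] sm_dright[OF U] sm_dleft[OF U] Esm) auto

lemma sm_Lap': "sm U F \<Longrightarrow> sm U (Lap m \<rho> E F)"
  unfolding Lap_def
  by (intro sm_gmult[OF U] sm_ginv[OF U] rho_sm rho_nz sm_sum[OF U] sm_scale[OF U] sm_dleft[OF U] Esm) auto

lemma sm_iter: "sm U F \<Longrightarrow> sm U ((abr m E \<Psi> ^^ j) F)"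
  by (induction j) (auto intro: sm_abr' Psi_sm)

lemma supp_exp_nz: "(gexp m a) {} \<noteq> 0"
  by (simp add: gexp_empty)

lemma fact_Suc_div: "of_nat (Suc l) * (c / fact (Suc l)) = (c / fact l :: complex)"
proof -
  have "(fact (Suc l) :: complex) = of_nat (Suc l) * fact l" by (simp add: fact_Suc)
  moreover have nz: "(of_nat (Suc l) :: complex) \<noteq> 0" by (rule of_nat_neq_0)
  ultimately show ?thesis by (metis nonzero_mult_divide_mult_cancel_left nz times_divide_eq_right)
qed

lemma main:
  fixes Wi :: "'n sfun" and Wf :: "nat \<Rightarrow> 'n sfun" and hb :: complex
  assumes hbar: "hb \<noteq> 0"
    and Wi: "sfun m U Wi" "homog 0 U Wi"
    and Wf: "\<forall>k. sfun m U (Wf k) \<and> homog 0 U (Wf k)"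
    and Wf0: "\<forall>x\<in>U. Wf 0 x = Wi x"
    and trans: "\<forall>n. \<forall>x\<in>U.
        sser_exp m (\<lambda>k y. gscale (\<i> / hb) (Wf k y)) n x
        = gscale ((-1) ^ n / fact n)
            ((commLap m \<rho> E \<Psi> ^^ n) (\<lambda>y. gexp m (gscale (\<i> / hb) (Wi y))) x)"
  shows "\<forall>n. \<forall>x\<in>U.
        Wf n x = gscale (1 / fact n) ((abr m E \<Psi> ^^ n) Wi x)
               + (if n = 0 then 0
                  else gscale (\<i> * hb / fact n) ((abr m E \<Psi> ^^ (n - 1)) (Lap m \<rho> E \<Psi>) x))"
proof -
  define X where "X k y = gscale (\<i> / hb) (Wf k y)" for k y
  define e where "e n = sser_exp m X n" for n
  define L where "L = Lap m \<rho> E \<Psi>"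
  define C where "C = commLap m \<rho> E \<Psi>"
  define G0 where "G0 = (\<lambda>y. gexp m (gscale (\<i> / hb) (Wi y)))"
  define Ai where "Ai j = (abr m E \<Psi> ^^ j) Wi" for j
  define Bi where "Bi j = (abr m E \<Psi> ^^ j) L" for j
  define a where "a l = \<i> / hb / fact l" for l
  define b where "b l = (if l = 0 then 0 else - 1 / fact l :: complex)" for l
  define Xc where "Xc l y = gscale (a l) (Ai l y) + gscale (b l) (Bi (l - 1) y)" for l y
  have Xf: "X = (\<lambda>k y. gscale (\<i> / hb) (Wf k y))" by (simp add: X_def fun_eq_iff)
  have Xsm: "sm U (X j)" for j unfolding X_def using Wf by (intro sm_scale[OF U] sfun_sm) auto
  have Xs: "supp m (X j y)" if "y \<in> U" for j y unfolding X_def using Wf that by (intro supp_scale sfun_supp) auto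
  have Xp: "par 0 (X j y)" if "y \<in> U" for j y unfolding X_def using Wf that by (intro par_scale) (auto simp: homog_par)
  have Aism: "sm U (Ai j)" for j unfolding Ai_def by (rule sm_iter[OF sfun_sm[OF Wi(1)]])
  have Bism: "sm U (Bi j)" for j unfolding Bi_def L_def by (rule sm_iter[OF sm_Lap'[OF Psi_sm]])
  have esm: "sm U (e n)" for n unfolding e_def by (rule sm_sser_exp[OF Xsm])
  have es: "supp m (e n y)" if "y \<in> U" for n y unfolding e_def by (rule supp_sser_exp) (rule Xs[OF that])
  have ep: "par 0 (e n y)" if "y \<in> U" for n y unfolding e_def by (rule par_sser_exp) (rule Xp[OF that])
  have trans': "e n x = gscale ((-1) ^ n / fact n) ((C ^^ n) G0 x)" if "x \<in> U" for n x
    using trans that unfolding e_def Xf C_def G0_def by blast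
  have cand: "gscale (\<i> / hb) (gscale (1 / fact n) (Ai n x) + (if n = 0 then 0 else gscale (\<i> * hb / fact n) (Bi (n - 1) x)))
      = Xc n x" for n x
  proof (cases "n = 0")
    case True thus ?thesis by (simp add: Xc_def a_def b_def)
  next
    case False
    have "\<i> / hb * (\<i> * hb / fact n) = (- 1 / fact n :: complex)" using hbar by (simp add: field_simps)
    thus ?thesis using False by (simp add: Xc_def a_def b_def gscale_add mult.commute)
  qed
  have CR: "abr m E \<Psi> (Xc l) x = gscale (of_nat (Suc l)) (Xc (Suc l) x) + (if l = 0 then L x else 0)"
    if x: "x \<in> U" for l x
  proof -
    have "abr m E \<Psi> (Xc l) x = gscale (a l) (abr m E \<Psi> (Ai l) x) + gscale (b l) (abr m E \<Psi> (Bi (l - 1)) x)"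
    proof -
      have "Xc l = (\<lambda>y. gscale (a l) (Ai l y) + gscale (b l) (Bi (l - 1) y))" by (simp add: Xc_def fun_eq_iff)
      thus ?thesis by (simp add: abr_add sm_scale[OF U] Aism Bism abr_scale x)
    qed
    also have "abr m E \<Psi> (Ai l) x = Ai (Suc l) x" by (simp add: Ai_def)
    also have "gscale (b l) (abr m E \<Psi> (Bi (l - 1)) x) = gscale (b l) (Bi l x)"
      by (cases l) (simp_all add: b_def Bi_def)
    finally have lhs: "abr m E \<Psi> (Xc l) x = gscale (a l) (Ai (Suc l) x) + gscale (b l) (Bi l x)" .
    have ea: "of_nat (Suc l) * a (Suc l) = a l" unfolding a_def by (rule fact_Suc_div)
    have eb: "of_nat (Suc l) * b (Suc l) = - 1 / fact l" unfolding b_def using fact_Suc_div[of l "-1"] by simp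
    show ?thesis
    proof (cases "l = 0")
      case True
      have "gscale (a l) (Ai (Suc l) x) + gscale (b l) (Bi l x) =
        gscale (of_nat (Suc l) * a (Suc l)) (Ai (Suc l) x) + gscale (of_nat (Suc l) * b (Suc l)) (Bi (Suc l - 1) x) + L x"
        unfolding ea eb using True by (rule_tac ext) (simp add: b_def Bi_def)
      thus ?thesis unfolding lhs Xc_def gscale_add gscale_gscale using True by simp
    next
      case False
      have bl: "b l = - 1 / fact l" using False by (simp add: b_def)
      have "gscale (a l) (Ai (Suc l) x) + gscale (b l) (Bi l x) =
        gscale (of_nat (Suc l) * a (Suc l)) (Ai (Suc l) x) + gscale (of_nat (Suc l) * b (Suc l)) (Bi (Suc l - 1) x)"
        unfolding ea eb bl by simp
      thus ?thesis unfolding lhs Xc_def gscale_add gscale_gscale using False by simp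
    qed
  qed
  have e0: "e 0 x = gexp m (X 0 x)" if x: "x \<in> U" for x
    unfolding e_def sser_exp_def using gmult_gone_right[OF supp_gexp[OF Xs[OF x]]] by simp
  have R: "gscale (of_nat (Suc k)) (e (Suc k) x) = abr m E \<Psi> (e k) x - gmult (L x) (e k x)"
    if x: "x \<in> U" for k x
  proof -
    define c where "c = (-1::complex) ^ k * fact k"
    have Tk: "(C ^^ k) G0 y = gscale c (e k y)" if y: "y \<in> U" for y
    proof -
      have "gscale c (e k y) = gscale (c * ((-1) ^ k / fact k)) ((C ^^ k) G0 y)"
        using trans'[OF y] by simp
      moreover have "c * ((-1) ^ k / fact k) = 1"
        unfolding c_def by (simp add: power_add[symmetric] flip: mult_2)
      ultimately show ?thesis by simp
    qed
    have "(C ^^ Suc k) G0 x = C ((C ^^ k) G0) x" by simp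
    also have "\<dots> = C (\<lambda>y. gscale c (e k y)) x"
      unfolding C_def by (rule commLap_local[OF U x]) (simp add: Tk[unfolded C_def])
    also have "\<dots> = gmult (L x) (gscale c (e k x)) - abr m E \<Psi> (\<lambda>y. gscale c (e k y)) x"
      unfolding C_def L_def by (rule commLap_eq[OF sm_scale[OF U esm] supp_scale[OF es] x])
    also have "\<dots> = gscale c (gmult (L x) (e k x) - abr m E \<Psi> (e k) x)"
      by (simp add: abr_scale[OF esm x] gmult_scale_right gscale_diff)
    finally have CS: "(C ^^ Suc k) G0 x = gscale c (gmult (L x) (e k x) - abr m E \<Psi> (e k) x)" .
    have coef: "of_nat (Suc k) * ((-1) ^ Suc k / fact (Suc k) * c) = (-1::complex)"
    proof -
      have "of_nat (Suc k) * ((-1) ^ Suc k / fact (Suc k)) = ((-1::complex) ^ Suc k / fact k)"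
        by (rule fact_Suc_div)
      hence "of_nat (Suc k) * ((-1) ^ Suc k / fact (Suc k) * c) = (-1) ^ Suc k / fact k * ((-1) ^ k * fact k)"
        unfolding c_def by (metis mult.assoc)
      also have "\<dots> = - ((-1) ^ k * (-1) ^ k)" by simp
      also have "\<dots> = -1" by (simp add: power_add[symmetric] flip: mult_2)
      finally show ?thesis .
    qed
    have "gscale (of_nat (Suc k)) (e (Suc k) x) = gscale (of_nat (Suc k) * ((-1) ^ Suc k / fact (Suc k) * c)) (gmult (L x) (e k x) - abr m E \<Psi> (e k) x)"
      unfolding trans'[OF x] CS by simp
    also have "\<dots> = abr m E \<Psi> (e k) x - gmult (L x) (e k x)"
      unfolding coef by (rule ext) simp
    finally show ?thesis .
  qed
  have XX: "\<forall>x\<in>U. X n x = Xc n x" for n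
  proof (induction n rule: less_induct)
    case (less n)
    show ?case
    proof (cases n)
      case 0
      show ?thesis using Wf0 by (simp add: 0 X_def Xc_def a_def b_def Ai_def)
    next
      case (Suc k)
      show ?thesis
      proof
        fix x assume x: "x \<in> U"
        have IH: "X j y = Xc j y" if "j < Suc k" "y \<in> U" for j y using less Suc that by auto
        have I1': "gscale (of_nat (Suc k)) (e (Suc k) x) = (\<Sum>l\<le>Suc k. gscale (of_nat l) (gmult (X l x) (e (Suc k - l) x)))"
          unfolding e_def by (rule I1) (rule Xp[OF x])
        have shift: "(\<Sum>l\<le>Suc k. gscale (of_nat l) (gmult (X l x) (e (Suc k - l) x)))
            = (\<Sum>l\<le>k. gscale (of_nat (Suc l)) (gmult (X (Suc l) x) (e (k - l) x)))"
          unfolding sum.atMost_Suc_shift by simp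
        have I2': "abr m E \<Psi> (e k) x = (\<Sum>l\<le>k. gmult (abr m E \<Psi> (X l) x) (e (k - l) x))"
          unfolding e_def by (rule I2[OF Xsm Xs Xp x])
        have S: "(\<Sum>l\<le>k. gmult (abr m E \<Psi> (X l) x) (e (k - l) x))
            = (\<Sum>l\<le>k. gscale (of_nat (Suc l)) (gmult (Xc (Suc l) x) (e (k - l) x))) + gmult (L x) (e k x)"
        proof -
          have "gmult (abr m E \<Psi> (X l) x) (e (k - l) x) =
              gscale (of_nat (Suc l)) (gmult (Xc (Suc l) x) (e (k - l) x)) + (if l = 0 then gmult (L x) (e k x) else 0)"
            if l: "l \<in> {..k}" for l
          proof -
            have "abr m E \<Psi> (X l) x = abr m E \<Psi> (Xc l) x"
              by (rule abr_local[OF U x]) (use l IH in auto)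
            thus ?thesis unfolding CR[OF x] by (simp add: gmult_add_left gmult_scale_left)
          qed
          hence "(\<Sum>l\<le>k. gmult (abr m E \<Psi> (X l) x) (e (k - l) x)) =
              (\<Sum>l\<le>k. gscale (of_nat (Suc l)) (gmult (Xc (Suc l) x) (e (k - l) x)) + (if l = 0 then gmult (L x) (e k x) else 0))"
            by (rule sum.cong[OF refl])
          also have "\<dots> = (\<Sum>l\<le>k. gscale (of_nat (Suc l)) (gmult (Xc (Suc l) x) (e (k - l) x))) + gmult (L x) (e k x)"
            by (simp only: sum.distrib) (simp add: sum.delta)
          finally show ?thesis .
        qed
        have eq: "(\<Sum>l\<le>k. gscale (of_nat (Suc l)) (gmult (X (Suc l) x) (e (k - l) x)))
            = (\<Sum>l\<le>k. gscale (of_nat (Suc l)) (gmult (Xc (Suc l) x) (e (k - l) x)))"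
        proof -
          have "(\<Sum>l\<le>k. gscale (of_nat (Suc l)) (gmult (X (Suc l) x) (e (k - l) x)))
              = abr m E \<Psi> (e k) x - gmult (L x) (e k x)"
            using I1' shift R[OF x] by simp
          also have "\<dots> = (\<Sum>l\<le>k. gscale (of_nat (Suc l)) (gmult (Xc (Suc l) x) (e (k - l) x)))"
            unfolding I2' S by simp
          finally show ?thesis .
        qed
        have low: "(\<Sum>l<k. gscale (of_nat (Suc l)) (gmult (X (Suc l) x) (e (k - l) x)))
            = (\<Sum>l<k. gscale (of_nat (Suc l)) (gmult (Xc (Suc l) x) (e (k - l) x)))"
          by (rule sum.cong[OF refl]) (simp add: IH x)
        have top: "gscale (of_nat (Suc k)) (gmult (X (Suc k) x) (e 0 x)) = gscale (of_nat (Suc k)) (gmult (Xc (Suc k) x) (e 0 x))"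
          using eq unfolding lessThan_Suc_atMost[symmetric] sum.lessThan_Suc low by simp
        hence top': "gmult (X (Suc k) x) (e 0 x) = gmult (Xc (Suc k) x) (e 0 x)"
          by (metis gscale_gscale gscale_one nonzero_divide_eq_eq of_nat_neq_0 divide_self_if)
        define g where "g = gexp m (X 0 x)"
        have gp: "par 0 g" unfolding g_def by (rule par_gexp[OF Xp[OF x]])
        have gs: "supp m g" unfolding g_def by (rule supp_gexp[OF Xs[OF x]])
        have gnz: "g {} \<noteq> 0" unfolding g_def by (rule supp_exp_nz)
        have "gmult g (X (Suc k) x) = gmult g (Xc (Suc k) x)"
          using top' unfolding e0[OF x] g_def[symmetric] gmult_comm_ev2[OF gp] .
        moreover have "fin (X (Suc k) x)" by (rule supp_fin[OF Xs[OF x]])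
        moreover have "fin (Xc (Suc k) x)"
        proof -
          have "fin (Ai (Suc k) x)" by (simp add: Ai_def fin_abr)
          moreover have "fin (Bi k x)" by (cases k) (simp_all add: Bi_def L_def fin_abr fin_Lap)
          ultimately show ?thesis by (simp add: Xc_def fin_add fin_scale)
        qed
        ultimately show "X n x = Xc n x" unfolding Suc by (rule gmult_cancel_fin[OF gs gnz])
      qed
    qed
  qed
  show ?thesis
  proof (intro allI ballI)
    fix n x assume x: "x \<in> U"
    have "Wf n x = gscale (hb / \<i>) (X n x)" using hbar by (simp add: X_def)
    also have "\<dots> = gscale (hb / \<i>) (Xc n x)" using XX x by simp
    also have "\<dots> = gscale (hb / \<i>) (gscale (\<i> / hb) (gscale (1 / fact n) (Ai n x) + (if n = 0 then 0 else gscale (\<i> * hb / fact n) (Bi (n - 1) x))))"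
      unfolding cand ..
    also have "\<dots> = gscale (1 / fact n) (Ai n x) + (if n = 0 then 0 else gscale (\<i> * hb / fact n) (Bi (n - 1) x))"
      using hbar by simp
    finally show "Wf n x = gscale (1 / fact n) ((abr m E \<Psi> ^^ n) Wi x)
               + (if n = 0 then 0 else gscale (\<i> * hb / fact n) ((abr m E \<Psi> ^^ (n - 1)) (Lap m \<rho> E \<Psi>) x))"
      by (simp add: Ai_def Bi_def L_def)
  qed
qed

end

theorem proposition2p1:
  fixes m :: nat and U :: "(real^'n::finite) set"
    and \<rho> :: "'n sfun" and E :: "'n + nat \<Rightarrow> 'n + nat \<Rightarrow> 'n sfun"
    and \<Psi> Wi :: "'n sfun" and Wf :: "nat \<Rightarrow> 'n sfun" and hb :: complex
  assumes U: "open U"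
    and E: "antisymplectic m U E"
    and rho: "sfun m U \<rho>" "homog 0 U \<rho>" "\<forall>x\<in>U. \<rho> x {} \<noteq> 0"
    and nilp: "nilpotent_Lap m U \<rho> E"
    and Psi: "sfun m U \<Psi>" "homog 1 U \<Psi>"
    and hbar: "hb \<noteq> 0"
    and Wi: "sfun m U Wi" "homog 0 U Wi"
    and Wf: "\<forall>k. sfun m U (Wf k) \<and> homog 0 U (Wf k)"
    and Wf0: "\<forall>x\<in>U. Wf 0 x = Wi x"
    and trans: "\<forall>n. \<forall>x\<in>U.
        sser_exp m (\<lambda>k y. gscale (\<i> / hb) (Wf k y)) n x
        = gscale ((-1) ^ n / fact n)
            ((commLap m \<rho> E \<Psi> ^^ n) (\<lambda>y. gexp m (gscale (\<i> / hb) (Wi y))) x)"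
  shows "\<forall>n. \<forall>x\<in>U.
        Wf n x = gscale (1 / fact n) ((abr m E \<Psi> ^^ n) Wi x)
               + (if n = 0 then 0
                  else gscale (\<i> * hb / fact n) ((abr m E \<Psi> ^^ (n - 1)) (Lap m \<rho> E \<Psi>) x))"
proof -
  have Ea: "\<forall>A\<in>idx m. \<forall>B\<in>idx m. sfun m U (E A B) \<and> homog (eps A + eps B + 1) U (E A B)
        \<and> (\<forall>x\<in>U. E B A x = gscale (- ((-1) ^ ((eps A + 1) * (eps B + 1)))) (E A B x))"
    using E unfolding antisymplectic_def by blast
  interpret BV m U \<rho> E \<Psi>
  proof
    show "open U" by (rule U)
    show "\<And>A B. A \<in> idx m \<Longrightarrow> B \<in> idx m \<Longrightarrow> sfun m U (E A B)" using Ea by blast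
    show "\<And>A B. A \<in> idx m \<Longrightarrow> B \<in> idx m \<Longrightarrow> homog (eps A + eps B + 1) U (E A B)" using Ea by blast
    show "\<And>A B x. A \<in> idx m \<Longrightarrow> B \<in> idx m \<Longrightarrow> x \<in> U \<Longrightarrow>
        E B A x = gscale (- ((-1) ^ ((eps A + 1) * (eps B + 1)))) (E A B x)" using Ea by blast
    show "sfun m U \<rho>" "homog 0 U \<rho>" by (rule rho(1), rule rho(2))
    show "\<And>x. x \<in> U \<Longrightarrow> \<rho> x {} \<noteq> 0" using rho(3) by blast
    show "sfun m U \<Psi>" "homog 1 U \<Psi>" by (rule Psi(1), rule Psi(2))
  qed
  show ?thesis by (rule main[OF hbar Wi Wf Wf0 trans])
qed

end
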